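(* Let $(\mathscr C,A,\psi)$ be an entwining structure with $A$ finite dimensional over $K$, and suppose there exists a normalized cointegral $\gamma=\{\gamma_X:A^*\otimes\mathscr C(X,X)\to A\}_{X\in Ob(\mathscr C)}$ on $(\mathscr C,A,\psi)$. Then (a) the forgetful functor $G_\psi:Com^{\mathscr C}_A(\psi)\to Com^{\mathscr C}$ is a semisimple functor, and (b) $G_\psi$ is a Maschke functor.
   Context: $K$ is a field. A $K$-coalgebra with several objects $\mathscr C$: a set $Ob(\mathscr C)$, vector spaces $\mathscr C(X,Y)$, linear comultiplications $\delta_{XYZ}:\mathscr C(X,Z)\to\mathscr C(Y,Z)\otimes\mathscr C(X,Y)$ and counits $\epsilon_X:\mathscr C(X,X)\to K$, with $(\delta_{YWZ}\otimes\mathrm{id})\delta_{XYZ}=(\mathrm{id}\otimes\delta_{XYW})\delta_{XWZ}$ and $(\epsilon_Y\otimes\mathrm{id})\delta_{XYY}=\mathrm{id}=(\mathrm{id}\otimes\epsilon_X)\delta_{XXY}$. For a $K$-algebra $A$ (multiplication $\mu_A$, unit $u_A$), an entwining structure $(\mathscr C,A,\psi)$ is a family of linear maps $\psi_{XY}:\mathscr C(X,Y)\otimes A\to A\otimes\mathscr C(X,Y)$, $\psi_{XY}(f\otimes a)=a_\psi\otimes f^\psi$, with (i) $(\mathrm{id}_A\otimes\delta_{XYZ})\psi_{XZ}=(\psi_{YZ}\otimes\mathrm{id})(\mathrm{id}\otimes\psi_{XY})(\delta_{XYZ}\otimes\mathrm{id}_A)$; (ii) $\psi_{XZ}(\mathrm{id}\otimes\mu_A)=(\mu_A\otimes\mathrm{id})(\mathrm{id}_A\otimes\psi_{XZ})(\psi_{XZ}\otimes\mathrm{id}_A)$;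 (iii) $\psi_{XZ}(f\otimes1)=1\otimes f$; (iv) $\epsilon_Z(g^\psi)a_\psi=\epsilon_Z(g)a$. $Com^{\mathscr C}$: right $\mathscr C$-comodules (spaces $\mathcal M(X)$, coactions $\rho_{XY}(m)=m_{Y0}\otimes m_{Y1}\in\mathcal M(Y)\otimes\mathscr C(X,Y)$ with $(\rho_{ZY}\otimes\mathrm{id})\rho_{XZ}=(\mathrm{id}\otimes\delta_{XZY})\rho_{XY}$, $(\mathrm{id}\otimes\epsilon_X)\rho_{XX}=\mathrm{id}$) with coaction-compatible morphisms; abelian with exactness objectwise. $Com^{\mathscr C}_A(\psi)$: comodules with right $A$-module structures on each $\mathcal M(X)$ such that $\rho_{XY}(ma)=m_{Y0}a_\psi\otimes(m_{Y1})^\psi$, with $A$-linear comodule morphisms; $G_\psi$ forgets the $A$-actions. $coev_A:K\to A\otimes A^*$, $1\mapsto\sum_ia_i\otimes a_i^*$ (basis and dual basis). A normalized cointegral is a family of linear maps $\gamma_X:A^*\otimes\mathscr C(X,X)\to A$ with: (1) $(\mathrm{id}_A\otimes\psi_{XY})(\psi_{XY}\otimes\gamma_X)(\mathrm{id}\otimes coev_A\otimes\mathrm{id})\delta_{XXY}=(\mathrm{id}_A\otimes\gamma_Y\otimes\mathrm{id})(coev_A\otimes\delta_{XYY})$ as maps $\mathscr C(X,Y)\to A\otimes A\otimes\mathscr C(X,Y)$; (2) $(\mathrm{id}_A\otimes\mu_A)(\mathrm{id}_A\otimes\gamma_X\otimes\mathrm{id}_A)(coev_A\otimes\mathrm{id}\otimes\mathrm{id}_A)=(\mu_A\otimes\gamma_X)(\mathrm{id}_A\otimes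 coev_A\otimes\mathrm{id})\psi_{XX}$ as maps $\mathscr C(X,X)\otimes A\to A\otimes A$; (3) $\mu_A(\mathrm{id}_A\otimes\gamma_X)(coev_A\otimes\mathrm{id})=u_A\circ\epsilon_X$ on $\mathscr C(X,X)$. A functor $F:\mathcal D\to\mathcal D'$ between abelian categories is semisimple if every short exact sequence in $\mathcal D$ whose image under $F$ is split exact in $\mathcal D'$ splits in $\mathcal D$; it is Maschke if for all morphisms $i:X\to X'$, $f:X\to Y$ in $\mathcal D$ with $F(i)$ a split monomorphism in $\mathcal D'$ there is $g:X'\to Y$ with $g\circ i=f$. *)

theory Defs
  imports Main
begin

text \<open>A K-vector space with basis B (a subset of a type 'b) is represented as the set FS B
  of finitely supported coordinate functions 'b => 'k with support inside B.
  The tensor product of FS B and FS D is FS (B \<times> D).\<close>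

definition fsupp :: "('b \<Rightarrow> 'k::zero) \<Rightarrow> 'b set" where
  "fsupp f = {x. f x \<noteq> 0}"

definition FS :: "'b set \<Rightarrow> ('b \<Rightarrow> 'k::zero) set" where
  "FS B = {f. finite (fsupp f) \<and> fsupp f \<subseteq> B}"

definition vzero :: "'b \<Rightarrow> 'k::zero" where
  "vzero = (\<lambda>_. 0)"

definition vadd :: "('b \<Rightarrow> 'k::plus) \<Rightarrow> ('b \<Rightarrow> 'k) \<Rightarrow> ('b \<Rightarrow> 'k)" where
  "vadd f g = (\<lambda>x. f x + g x)"

definition vsmul :: "'k::times \<Rightarrow> ('b \<Rightarrow> 'k) \<Rightarrow> ('b \<Rightarrow> 'k)" where
  "vsmul c f = (\<lambda>x. c * f x)"

definition bvec :: "'b \<Rightarrow> ('b \<Rightarrow> 'k::{zero,one})" where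
  "bvec b = (\<lambda>x. if x = b then 1 else 0)"

definition linear_on :: "'b set \<Rightarrow> 'd set \<Rightarrow> (('b \<Rightarrow> 'k::field) \<Rightarrow> ('d \<Rightarrow> 'k)) \<Rightarrow> bool" where
  "linear_on B D \<phi> \<longleftrightarrow>
     (\<forall>f\<in>FS B. \<phi> f \<in> FS D) \<and>
     (\<forall>f\<in>FS B. \<forall>g\<in>FS B. \<phi> (vadd f g) = vadd (\<phi> f) (\<phi> g)) \<and>
     (\<forall>c. \<forall>f\<in>FS B. \<phi> (vsmul c f) = vsmul c (\<phi> f))"

definition lfun_on :: "'b set \<Rightarrow> (('b \<Rightarrow> 'k::field) \<Rightarrow> 'k) \<Rightarrow> bool" where
  "lfun_on B e \<longleftrightarrow>
     (\<forall>f\<in>FS B. \<forall>g\<in>FS B. e (vadd f g) = e f + e g) \<and>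
     (\<forall>c. \<forall>f\<in>FS B. e (vsmul c f) = c * e f)"

definition tens :: "('b \<Rightarrow> 'k::times) \<Rightarrow> ('d \<Rightarrow> 'k) \<Rightarrow> ('b \<times> 'd \<Rightarrow> 'k)" where
  "tens f g = (\<lambda>(x, y). f x * g y)"

definition tmap :: "(('b \<Rightarrow> 'k::comm_ring_1) \<Rightarrow> ('d \<Rightarrow> 'k)) \<Rightarrow> (('e \<Rightarrow> 'k) \<Rightarrow> ('g \<Rightarrow> 'k))
                     \<Rightarrow> ('b \<times> 'e \<Rightarrow> 'k) \<Rightarrow> ('d \<times> 'g \<Rightarrow> 'k)" where
  "tmap \<phi> \<chi> t = (\<lambda>(x, y). \<Sum>p\<in>fsupp t. t p * (\<phi> (bvec (fst p)) x * \<chi> (bvec (snd p)) y))"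

definition assocr :: "(('x \<times> 'y) \<times> 'z \<Rightarrow> 'k) \<Rightarrow> ('x \<times> ('y \<times> 'z) \<Rightarrow> 'k)" where
  "assocr t = (\<lambda>(x, (y, z)). t ((x, y), z))"

definition assocl :: "('x \<times> ('y \<times> 'z) \<Rightarrow> 'k) \<Rightarrow> (('x \<times> 'y) \<times> 'z \<Rightarrow> 'k)" where
  "assocl t = (\<lambda>((x, y), z). t (x, (y, z)))"

text \<open>(e \<otimes> id) : V \<otimes> W -> K \<otimes> W = W  and  (id \<otimes> e) : V \<otimes> W -> V \<otimes> K = V\<close>
definition econtr_l :: "(('b \<Rightarrow> 'k::comm_ring_1) \<Rightarrow> 'k) \<Rightarrow> ('b \<times> 'd \<Rightarrow> 'k) \<Rightarrow> ('d \<Rightarrow> 'k)" where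
  "econtr_l e t = (\<lambda>y. \<Sum>p\<in>fsupp t. if snd p = y then e (bvec (fst p)) * t p else 0)"

definition econtr_r :: "(('d \<Rightarrow> 'k::comm_ring_1) \<Rightarrow> 'k) \<Rightarrow> ('b \<times> 'd \<Rightarrow> 'k) \<Rightarrow> ('b \<Rightarrow> 'k)" where
  "econtr_r e t = (\<lambda>x. \<Sum>p\<in>fsupp t. if fst p = x then t p * e (bvec (snd p)) else 0)"

text \<open>u \<otimes> v \<mapsto> (first half of u) \<otimes> v \<otimes> (second half of u), i.e. (id \<otimes> v \<otimes> id) applied to u,
  for v an element of V1 \<otimes> V2 (used to insert coev in the middle)\<close>
definition ins_mid :: "('a1 \<times> 'a2 \<Rightarrow> 'k::times) \<Rightarrow> ('c1 \<times> 'c2 \<Rightarrow> 'k) \<Rightarrow> (('c1 \<times> 'a1) \<times> ('a2 \<times> 'c2) \<Rightarrow> 'k)" where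
  "ins_mid v s = (\<lambda>((c1, a), (b, c2)). s (c1, c2) * v (a, b))"

text \<open>Objects: Ob. The space C(X,Y) is FS (Cb X Y).
  delta X Y Z : C(X,Z) -> C(Y,Z) \<otimes> C(X,Y);  eps X : C(X,X) -> K.\<close>
definition coalg_so ::
  "'o set \<Rightarrow> ('o \<Rightarrow> 'o \<Rightarrow> 'c set) \<Rightarrow> ('o \<Rightarrow> 'o \<Rightarrow> 'o \<Rightarrow> ('c \<Rightarrow> 'k::field) \<Rightarrow> ('c \<times> 'c \<Rightarrow> 'k))
   \<Rightarrow> ('o \<Rightarrow> ('c \<Rightarrow> 'k) \<Rightarrow> 'k) \<Rightarrow> bool" where
  "coalg_so Ob Cb \<delta> \<epsilon> \<longleftrightarrow>
     (\<forall>X\<in>Ob. \<forall>Y\<in>Ob. \<forall>Z\<in>Ob. linear_on (Cb X Z) (Cb Y Z \<times> Cb X Y) (\<delta> X Y Z)) \<and>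
     (\<forall>X\<in>Ob. lfun_on (Cb X X) (\<epsilon> X)) \<and>
     (\<forall>X\<in>Ob. \<forall>Y\<in>Ob. \<forall>W\<in>Ob. \<forall>Z\<in>Ob. \<forall>f\<in>FS (Cb X Z).
        assocr (tmap (\<delta> Y W Z) id (\<delta> X Y Z f)) = tmap id (\<delta> X Y W) (\<delta> X W Z f)) \<and>
     (\<forall>X\<in>Ob. \<forall>Y\<in>Ob. \<forall>f\<in>FS (Cb X Y).
        econtr_l (\<epsilon> Y) (\<delta> X Y Y f) = f \<and> econtr_r (\<epsilon> X) (\<delta> X X Y f) = f)"

text \<open>A = FS BA, multiplication mu : A \<otimes> A -> A, unit element one (u_A(1) = one)\<close>
definition kalg :: "'a set \<Rightarrow> (('a \<times> 'a \<Rightarrow> 'k::field) \<Rightarrow> ('a \<Rightarrow> 'k)) \<Rightarrow> ('a \<Rightarrow> 'k) \<Rightarrow> bool" where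
  "kalg BA mu one \<longleftrightarrow>
     linear_on (BA \<times> BA) BA mu \<and> one \<in> FS BA \<and>
     (\<forall>t\<in>FS ((BA \<times> BA) \<times> BA). mu (tmap mu id t) = mu (tmap id mu (assocr t))) \<and>
     (\<forall>a\<in>FS BA. mu (tens one a) = a \<and> mu (tens a one) = a)"

definition entwining ::
  "'o set \<Rightarrow> ('o \<Rightarrow> 'o \<Rightarrow> 'c set) \<Rightarrow> ('o \<Rightarrow> 'o \<Rightarrow> 'o \<Rightarrow> ('c \<Rightarrow> 'k::field) \<Rightarrow> ('c \<times> 'c \<Rightarrow> 'k))
   \<Rightarrow> ('o \<Rightarrow> ('c \<Rightarrow> 'k) \<Rightarrow> 'k) \<Rightarrow> 'a set \<Rightarrow> (('a \<times> 'a \<Rightarrow> 'k) \<Rightarrow> ('a \<Rightarrow> 'k)) \<Rightarrow> ('a \<Rightarrow> 'k)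
   \<Rightarrow> ('o \<Rightarrow> 'o \<Rightarrow> ('c \<times> 'a \<Rightarrow> 'k) \<Rightarrow> ('a \<times> 'c \<Rightarrow> 'k)) \<Rightarrow> bool" where
  "entwining Ob Cb \<delta> \<epsilon> BA mu one \<psi> \<longleftrightarrow>
     (\<forall>X\<in>Ob. \<forall>Y\<in>Ob. linear_on (Cb X Y \<times> BA) (BA \<times> Cb X Y) (\<psi> X Y)) \<and>
     \<comment> \<open>(i)\<close>
     (\<forall>X\<in>Ob. \<forall>Y\<in>Ob. \<forall>Z\<in>Ob. \<forall>t\<in>FS (Cb X Z \<times> BA).
        tmap id (\<delta> X Y Z) (\<psi> X Z t) =
        assocr (tmap (\<psi> Y Z) id (assocl (tmap id (\<psi> X Y) (assocr (tmap (\<delta> X Y Z) id t)))))) \<and>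
     \<comment> \<open>(ii)\<close>
     (\<forall>X\<in>Ob. \<forall>Z\<in>Ob. \<forall>t\<in>FS (Cb X Z \<times> (BA \<times> BA)).
        \<psi> X Z (tmap id mu t) =
        tmap mu id (assocl (tmap id (\<psi> X Z) (assocr (tmap (\<psi> X Z) id (assocl t)))))) \<and>
     \<comment> \<open>(iii)\<close>
     (\<forall>X\<in>Ob. \<forall>Z\<in>Ob. \<forall>f\<in>FS (Cb X Z). \<psi> X Z (tens f one) = tens one f) \<and>
     \<comment> \<open>(iv), for g in C(Z,Z)\<close>
     (\<forall>Z\<in>Ob. \<forall>t\<in>FS (Cb Z Z \<times> BA). econtr_r (\<epsilon> Z) (\<psi> Z Z t) = econtr_l (\<epsilon> Z) t)"

text \<open>A is finite dimensional with basis BA; A^* is represented by coordinates w.r.t. the dual basis,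
  i.e. again as FS BA (the dual basis vector a_b^* corresponds to bvec b).
  coev_A = \<Sum>_b a_b \<otimes> a_b^* in A \<otimes> A^*.\<close>
definition coev :: "'a set \<Rightarrow> ('a \<times> 'a \<Rightarrow> 'k::{zero,one})" where
  "coev BA = (\<lambda>(x, y). if x = y \<and> x \<in> BA then 1 else 0)"

text \<open>gam X : A^* \<otimes> C(X,X) -> A\<close>
definition norm_cointegral ::
  "'o set \<Rightarrow> ('o \<Rightarrow> 'o \<Rightarrow> 'c set) \<Rightarrow> ('o \<Rightarrow> 'o \<Rightarrow> 'o \<Rightarrow> ('c \<Rightarrow> 'k::field) \<Rightarrow> ('c \<times> 'c \<Rightarrow> 'k))
   \<Rightarrow> ('o \<Rightarrow> ('c \<Rightarrow> 'k) \<Rightarrow> 'k) \<Rightarrow> 'a set \<Rightarrow> (('a \<times> 'a \<Rightarrow> 'k) \<Rightarrow> ('a \<Rightarrow> 'k)) \<Rightarrow> ('a \<Rightarrow> 'k)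
   \<Rightarrow> ('o \<Rightarrow> 'o \<Rightarrow> ('c \<times> 'a \<Rightarrow> 'k) \<Rightarrow> ('a \<times> 'c \<Rightarrow> 'k))
   \<Rightarrow> ('o \<Rightarrow> ('a \<times> 'c \<Rightarrow> 'k) \<Rightarrow> ('a \<Rightarrow> 'k)) \<Rightarrow> bool" where
  "norm_cointegral Ob Cb \<delta> \<epsilon> BA mu one \<psi> \<gamma> \<longleftrightarrow>
     (\<forall>X\<in>Ob. linear_on (BA \<times> Cb X X) BA (\<gamma> X)) \<and>
     \<comment> \<open>(1)\<close>
     (\<forall>X\<in>Ob. \<forall>Y\<in>Ob. \<forall>f\<in>FS (Cb X Y).
        tmap id (\<psi> X Y) (assocr (tmap (\<psi> X Y) (\<gamma> X) (ins_mid (coev BA) (\<delta> X X Y f)))) =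
        tmap id (tmap (\<gamma> Y) id) (tmap id assocl (assocr (tens (coev BA) (\<delta> X Y Y f))))) \<and>
     \<comment> \<open>(2)\<close>
     (\<forall>X\<in>Ob. \<forall>t\<in>FS (Cb X X \<times> BA).
        tmap id mu (tmap id (tmap (\<gamma> X) id) (tmap id assocl (assocr (tens (coev BA) t)))) =
        tmap mu (\<gamma> X) (ins_mid (coev BA) (\<psi> X X t))) \<and>
     \<comment> \<open>(3)\<close>
     (\<forall>X\<in>Ob. \<forall>f\<in>FS (Cb X X).
        mu (tmap id (\<gamma> X) (assocr (tens (coev BA) f))) = vsmul (\<epsilon> X f) one)"

text \<open>A right C-comodule: spaces M(X) = FS (BM X), coactions rho X Y : M(X) -> M(Y) \<otimes> C(X,Y)\<close>
definition comod ::
  "'o set \<Rightarrow> ('o \<Rightarrow> 'o \<Rightarrow> 'c set) \<Rightarrow> ('o \<Rightarrow> 'o \<Rightarrow> 'o \<Rightarrow> ('c \<Rightarrow> 'k::field) \<Rightarrow> ('c \<times> 'c \<Rightarrow> 'k))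
   \<Rightarrow> ('o \<Rightarrow> ('c \<Rightarrow> 'k) \<Rightarrow> 'k) \<Rightarrow> ('o \<Rightarrow> 'm set) \<Rightarrow> ('o \<Rightarrow> 'o \<Rightarrow> ('m \<Rightarrow> 'k) \<Rightarrow> ('m \<times> 'c \<Rightarrow> 'k)) \<Rightarrow> bool" where
  "comod Ob Cb \<delta> \<epsilon> BM \<rho> \<longleftrightarrow>
     (\<forall>X\<in>Ob. \<forall>Y\<in>Ob. linear_on (BM X) (BM Y \<times> Cb X Y) (\<rho> X Y)) \<and>
     (\<forall>X\<in>Ob. \<forall>Y\<in>Ob. \<forall>Z\<in>Ob. \<forall>m\<in>FS (BM X).
        assocr (tmap (\<rho> Z Y) id (\<rho> X Z m)) = tmap id (\<delta> X Z Y) (\<rho> X Y m)) \<and>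
     (\<forall>X\<in>Ob. \<forall>m\<in>FS (BM X). econtr_r (\<epsilon> X) (\<rho> X X m) = m)"

definition comod_hom ::
  "'o set \<Rightarrow> ('o \<Rightarrow> 'o \<Rightarrow> 'c set) \<Rightarrow> ('o \<Rightarrow> 'm set) \<Rightarrow> ('o \<Rightarrow> 'o \<Rightarrow> ('m \<Rightarrow> 'k::field) \<Rightarrow> ('m \<times> 'c \<Rightarrow> 'k))
   \<Rightarrow> ('o \<Rightarrow> 'n set) \<Rightarrow> ('o \<Rightarrow> 'o \<Rightarrow> ('n \<Rightarrow> 'k) \<Rightarrow> ('n \<times> 'c \<Rightarrow> 'k))
   \<Rightarrow> ('o \<Rightarrow> ('m \<Rightarrow> 'k) \<Rightarrow> ('n \<Rightarrow> 'k)) \<Rightarrow> bool" where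
  "comod_hom Ob Cb BM \<rho>M BN \<rho>N \<phi> \<longleftrightarrow>
     (\<forall>X\<in>Ob. linear_on (BM X) (BN X) (\<phi> X)) \<and>
     (\<forall>X\<in>Ob. \<forall>Y\<in>Ob. \<forall>m\<in>FS (BM X). \<rho>N X Y (\<phi> X m) = tmap (\<phi> Y) id (\<rho>M X Y m))"

text \<open>objects of Com^C_A(psi): comodules with right A-actions act X : M(X) \<otimes> A -> M(X)
  such that rho X Y (m a) = m_{Y0} a_psi \<otimes> (m_{Y1})^psi\<close>
definition comodA ::
  "'o set \<Rightarrow> ('o \<Rightarrow> 'o \<Rightarrow> 'c set) \<Rightarrow> ('o \<Rightarrow> 'o \<Rightarrow> 'o \<Rightarrow> ('c \<Rightarrow> 'k::field) \<Rightarrow> ('c \<times> 'c \<Rightarrow> 'k))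
   \<Rightarrow> ('o \<Rightarrow> ('c \<Rightarrow> 'k) \<Rightarrow> 'k) \<Rightarrow> 'a set \<Rightarrow> (('a \<times> 'a \<Rightarrow> 'k) \<Rightarrow> ('a \<Rightarrow> 'k)) \<Rightarrow> ('a \<Rightarrow> 'k)
   \<Rightarrow> ('o \<Rightarrow> 'o \<Rightarrow> ('c \<times> 'a \<Rightarrow> 'k) \<Rightarrow> ('a \<times> 'c \<Rightarrow> 'k))
   \<Rightarrow> ('o \<Rightarrow> 'm set) \<Rightarrow> ('o \<Rightarrow> 'o \<Rightarrow> ('m \<Rightarrow> 'k) \<Rightarrow> ('m \<times> 'c \<Rightarrow> 'k))
   \<Rightarrow> ('o \<Rightarrow> ('m \<times> 'a \<Rightarrow> 'k) \<Rightarrow> ('m \<Rightarrow> 'k)) \<Rightarrow> bool" where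
  "comodA Ob Cb \<delta> \<epsilon> BA mu one \<psi> BM \<rho> act \<longleftrightarrow>
     comod Ob Cb \<delta> \<epsilon> BM \<rho> \<and>
     (\<forall>X\<in>Ob. linear_on (BM X \<times> BA) (BM X) (act X)) \<and>
     (\<forall>X\<in>Ob. \<forall>t\<in>FS ((BM X \<times> BA) \<times> BA).
        act X (tmap (act X) id t) = act X (tmap id mu (assocr t))) \<and>
     (\<forall>X\<in>Ob. \<forall>m\<in>FS (BM X). act X (tens m one) = m) \<and>
     (\<forall>X\<in>Ob. \<forall>Y\<in>Ob. \<forall>t\<in>FS (BM X \<times> BA).
        \<rho> X Y (act X t) =
        tmap (act Y) id (assocl (tmap id (\<psi> X Y) (assocr (tmap (\<rho> X Y) id t)))))"

definition comodA_hom ::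
  "'o set \<Rightarrow> ('o \<Rightarrow> 'o \<Rightarrow> 'c set) \<Rightarrow> 'a set
   \<Rightarrow> ('o \<Rightarrow> 'm set) \<Rightarrow> ('o \<Rightarrow> 'o \<Rightarrow> ('m \<Rightarrow> 'k::field) \<Rightarrow> ('m \<times> 'c \<Rightarrow> 'k)) \<Rightarrow> ('o \<Rightarrow> ('m \<times> 'a \<Rightarrow> 'k) \<Rightarrow> ('m \<Rightarrow> 'k))
   \<Rightarrow> ('o \<Rightarrow> 'n set) \<Rightarrow> ('o \<Rightarrow> 'o \<Rightarrow> ('n \<Rightarrow> 'k) \<Rightarrow> ('n \<times> 'c \<Rightarrow> 'k)) \<Rightarrow> ('o \<Rightarrow> ('n \<times> 'a \<Rightarrow> 'k) \<Rightarrow> ('n \<Rightarrow> 'k))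
   \<Rightarrow> ('o \<Rightarrow> ('m \<Rightarrow> 'k) \<Rightarrow> ('n \<Rightarrow> 'k)) \<Rightarrow> bool" where
  "comodA_hom Ob Cb BA BM \<rho>M actM BN \<rho>N actN \<phi> \<longleftrightarrow>
     comod_hom Ob Cb BM \<rho>M BN \<rho>N \<phi> \<and>
     (\<forall>X\<in>Ob. \<forall>t\<in>FS (BM X \<times> BA). \<phi> X (actM X t) = actN X (tmap (\<phi> X) id t))"

definition short_exact ::
  "'o set \<Rightarrow> ('o \<Rightarrow> 'm1 set) \<Rightarrow> ('o \<Rightarrow> 'm2 set) \<Rightarrow> ('o \<Rightarrow> 'm3 set)
   \<Rightarrow> ('o \<Rightarrow> ('m1 \<Rightarrow> 'k::zero) \<Rightarrow> ('m2 \<Rightarrow> 'k)) \<Rightarrow> ('o \<Rightarrow> ('m2 \<Rightarrow> 'k) \<Rightarrow> ('m3 \<Rightarrow> 'k)) \<Rightarrow> bool" where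
  "short_exact Ob B1 B2 B3 i p \<longleftrightarrow>
     (\<forall>X\<in>Ob. inj_on (i X) (FS (B1 X)) \<and> p X ` FS (B2 X) = FS (B3 X) \<and>
              {m \<in> FS (B2 X). p X m = vzero} = i X ` FS (B1 X))"

text \<open>A short exact sequence is split iff its monomorphism has a retraction.
  G_psi is semisimple: every short exact sequence in Com^C_A(psi) whose image under G_psi
  (same maps, forgetting the A-actions) splits in Com^C, splits in Com^C_A(psi).
  The type arguments fix the (arbitrary) types carrying the bases of the comodules.\<close>
definition Gpsi_semisimple ::
  "'o set \<Rightarrow> ('o \<Rightarrow> 'o \<Rightarrow> 'c set) \<Rightarrow> ('o \<Rightarrow> 'o \<Rightarrow> 'o \<Rightarrow> ('c \<Rightarrow> 'k::field) \<Rightarrow> ('c \<times> 'c \<Rightarrow> 'k))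
   \<Rightarrow> ('o \<Rightarrow> ('c \<Rightarrow> 'k) \<Rightarrow> 'k) \<Rightarrow> 'a set \<Rightarrow> (('a \<times> 'a \<Rightarrow> 'k) \<Rightarrow> ('a \<Rightarrow> 'k)) \<Rightarrow> ('a \<Rightarrow> 'k)
   \<Rightarrow> ('o \<Rightarrow> 'o \<Rightarrow> ('c \<times> 'a \<Rightarrow> 'k) \<Rightarrow> ('a \<times> 'c \<Rightarrow> 'k))
   \<Rightarrow> 'm1 itself \<Rightarrow> 'm2 itself \<Rightarrow> 'm3 itself \<Rightarrow> bool" where
  "Gpsi_semisimple Ob Cb \<delta> \<epsilon> BA mu one \<psi> T1 T2 T3 \<longleftrightarrow>
     (\<forall>(B1 :: 'o \<Rightarrow> 'm1 set) \<rho>1 act1 (B2 :: 'o \<Rightarrow> 'm2 set) \<rho>2 act2 (B3 :: 'o \<Rightarrow> 'm3 set) \<rho>3 act3 i p.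
        comodA Ob Cb \<delta> \<epsilon> BA mu one \<psi> B1 \<rho>1 act1 \<and>
        comodA Ob Cb \<delta> \<epsilon> BA mu one \<psi> B2 \<rho>2 act2 \<and>
        comodA Ob Cb \<delta> \<epsilon> BA mu one \<psi> B3 \<rho>3 act3 \<and>
        comodA_hom Ob Cb BA B1 \<rho>1 act1 B2 \<rho>2 act2 i \<and>
        comodA_hom Ob Cb BA B2 \<rho>2 act2 B3 \<rho>3 act3 p \<and>
        short_exact Ob B1 B2 B3 i p \<and>
        (\<exists>r. comod_hom Ob Cb B2 \<rho>2 B1 \<rho>1 r \<and> (\<forall>X\<in>Ob. \<forall>m\<in>FS (B1 X). r X (i X m) = m))
        \<longrightarrow>
        (\<exists>r. comodA_hom Ob Cb BA B2 \<rho>2 act2 B1 \<rho>1 act1 r \<and> (\<forall>X\<in>Ob. \<forall>m\<in>FS (B1 X). r X (i X m) = m)))"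

text \<open>G_psi is Maschke: for morphisms i : M1 -> M2, f : M1 -> M3 in Com^C_A(psi) with G_psi(i) a split
  monomorphism in Com^C, there is g : M2 -> M3 in Com^C_A(psi) with g \<circ> i = f.\<close>
definition Gpsi_Maschke ::
  "'o set \<Rightarrow> ('o \<Rightarrow> 'o \<Rightarrow> 'c set) \<Rightarrow> ('o \<Rightarrow> 'o \<Rightarrow> 'o \<Rightarrow> ('c \<Rightarrow> 'k::field) \<Rightarrow> ('c \<times> 'c \<Rightarrow> 'k))
   \<Rightarrow> ('o \<Rightarrow> ('c \<Rightarrow> 'k) \<Rightarrow> 'k) \<Rightarrow> 'a set \<Rightarrow> (('a \<times> 'a \<Rightarrow> 'k) \<Rightarrow> ('a \<Rightarrow> 'k)) \<Rightarrow> ('a \<Rightarrow> 'k)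
   \<Rightarrow> ('o \<Rightarrow> 'o \<Rightarrow> ('c \<times> 'a \<Rightarrow> 'k) \<Rightarrow> ('a \<times> 'c \<Rightarrow> 'k))
   \<Rightarrow> 'm1 itself \<Rightarrow> 'm2 itself \<Rightarrow> 'm3 itself \<Rightarrow> bool" where
  "Gpsi_Maschke Ob Cb \<delta> \<epsilon> BA mu one \<psi> T1 T2 T3 \<longleftrightarrow>
     (\<forall>(B1 :: 'o \<Rightarrow> 'm1 set) \<rho>1 act1 (B2 :: 'o \<Rightarrow> 'm2 set) \<rho>2 act2 (B3 :: 'o \<Rightarrow> 'm3 set) \<rho>3 act3 i f.
        comodA Ob Cb \<delta> \<epsilon> BA mu one \<psi> B1 \<rho>1 act1 \<and>
        comodA Ob Cb \<delta> \<epsilon> BA mu one \<psi> B2 \<rho>2 act2 \<and>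
        comodA Ob Cb \<delta> \<epsilon> BA mu one \<psi> B3 \<rho>3 act3 \<and>
        comodA_hom Ob Cb BA B1 \<rho>1 act1 B2 \<rho>2 act2 i \<and>
        comodA_hom Ob Cb BA B1 \<rho>1 act1 B3 \<rho>3 act3 f \<and>
        (\<exists>r. comod_hom Ob Cb B2 \<rho>2 B1 \<rho>1 r \<and> (\<forall>X\<in>Ob. \<forall>m\<in>FS (B1 X). r X (i X m) = m))
        \<longrightarrow>
        (\<exists>g. comodA_hom Ob Cb BA B2 \<rho>2 act2 B3 \<rho>3 act3 g \<and> (\<forall>X\<in>Ob. \<forall>m\<in>FS (B1 X). g X (i X m) = f X m)))"

end

theory Submission
  imports Defs
begin


definition addhom :: "'b set \<Rightarrow> (('b \<Rightarrow> 'k::field) \<Rightarrow> ('d \<Rightarrow> 'k)) \<Rightarrow> bool" where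
  "addhom B \<Phi> \<longleftrightarrow> (\<forall>f\<in>FS B. \<forall>g\<in>FS B. \<Phi> (vadd f g) = vadd (\<Phi> f) (\<Phi> g)) \<and>
     (\<forall>c. \<forall>f\<in>FS B. \<Phi> (vsmul c f) = vsmul c (\<Phi> f))"

definition maps :: "'b set \<Rightarrow> 'd set \<Rightarrow> (('b \<Rightarrow> 'k::zero) \<Rightarrow> ('d \<Rightarrow> 'k)) \<Rightarrow> bool" where
  "maps B D \<Phi> \<longleftrightarrow> (\<forall>f\<in>FS B. \<Phi> f \<in> FS D)"

definition lext :: "('b \<Rightarrow> 'd \<Rightarrow> 'k::comm_ring_1) \<Rightarrow> ('b \<Rightarrow> 'k) \<Rightarrow> ('d \<Rightarrow> 'k)" where
  "lext F t = (\<lambda>x. \<Sum>p\<in>fsupp t. t p * F p x)"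

definition vsum :: "'i set \<Rightarrow> ('i \<Rightarrow> 'b \<Rightarrow> 'k::comm_monoid_add) \<Rightarrow> ('b \<Rightarrow> 'k)" where
  "vsum S F = (\<lambda>x. \<Sum>i\<in>S. F i x)"

lemma linear_on_iff: "linear_on B D \<phi> \<longleftrightarrow> maps B D \<phi> \<and> addhom B \<phi>"
  unfolding linear_on_def maps_def addhom_def by blast

lemma FS_iff: "f \<in> FS B \<longleftrightarrow> finite (fsupp f) \<and> fsupp f \<subseteq> B"
  by (simp add: FS_def)

lemma FS_finite: "f \<in> FS B \<Longrightarrow> finite (fsupp f)" by (simp add: FS_def)
lemma FS_sub: "f \<in> FS B \<Longrightarrow> fsupp f \<subseteq> B" by (simp add: FS_def)
lemma FS_out: "f \<in> FS B \<Longrightarrow> x \<notin> B \<Longrightarrow> f x = 0"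
  unfolding FS_def fsupp_def by auto

lemma fsupp_vadd: "fsupp (vadd f g :: _ \<Rightarrow> 'k::field) \<subseteq> fsupp f \<union> fsupp g"
  unfolding fsupp_def vadd_def by auto
lemma fsupp_vsmul: "fsupp (vsmul c f :: _ \<Rightarrow> 'k::field) \<subseteq> fsupp f"
  unfolding fsupp_def vsmul_def by auto

lemma vzero_FS[simp]: "(vzero :: _ \<Rightarrow> 'k::field) \<in> FS B"
  unfolding FS_def fsupp_def vzero_def by auto
lemma vadd_FS[simp,intro]: "(f :: _ \<Rightarrow> 'k::field) \<in> FS B \<Longrightarrow> g \<in> FS B \<Longrightarrow> vadd f g \<in> FS B"
  unfolding FS_def using fsupp_vadd[of f g] by (auto intro: finite_subset)
lemma vsmul_FS[simp,intro]: "(f :: _ \<Rightarrow> 'k::field) \<in> FS B \<Longrightarrow> vsmul c f \<in> FS B"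
  unfolding FS_def using fsupp_vsmul[of c f] by (auto intro: finite_subset)

lemma fsupp_bvec[simp]: "fsupp (bvec b :: 'b \<Rightarrow> 'k::field) = {b}"
  unfolding fsupp_def bvec_def by auto
lemma bvec_FS[simp]: "((bvec b :: 'b \<Rightarrow> 'k::field) \<in> FS B) \<longleftrightarrow> b \<in> B"
  unfolding FS_def by simp

lemma fsupp_tens: "fsupp (tens u v :: _ \<Rightarrow> 'k::field) \<subseteq> fsupp u \<times> fsupp v"
  unfolding fsupp_def tens_def by auto
lemma tens_FS[simp,intro]: "(u :: _ \<Rightarrow> 'k::field) \<in> FS B \<Longrightarrow> v \<in> FS D \<Longrightarrow> tens u v \<in> FS (B \<times> D)"
proof -
  assume u: "u \<in> FS B" and v: "v \<in> FS D"
  have "finite (fsupp u \<times> fsupp v)" using u v by (simp add: FS_def)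
  then have "finite (fsupp (tens u v))" using fsupp_tens[of u v] finite_subset by blast
  moreover have "fsupp u \<times> fsupp v \<subseteq> B \<times> D" using u v by (auto simp: FS_def)
  ultimately show ?thesis using fsupp_tens[of u v] by (auto simp: FS_def)
qed

lemma bvec_pair: "(bvec (x, y) :: _ \<Rightarrow> 'k::field) = tens (bvec x) (bvec y)"
  unfolding bvec_def tens_def by (auto simp: fun_eq_iff)

lemma vsum_FS[intro]: fixes F :: "'i \<Rightarrow> 'b \<Rightarrow> 'k::field" shows "finite S \<Longrightarrow> (\<And>i. i \<in> S \<Longrightarrow> (F i :: _ \<Rightarrow> 'k::field) \<in> FS B) \<Longrightarrow> vsum S F \<in> FS B"
proof (induction S rule: finite_induct)
  case empty then show ?case by (simp add: vsum_def flip: vzero_def)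
next
  case (insert x F')
  have "vsum (insert x F') F = vadd (F x) (vsum F' F)"
    using insert by (simp add: vsum_def vadd_def)
  then show ?case using insert by auto
qed

lemma addhom_zero: fixes \<Phi> :: "('b \<Rightarrow> 'k::field) \<Rightarrow> ('d \<Rightarrow> 'k)" assumes "addhom B \<Phi>" shows "\<Phi> vzero = vzero"
proof -
  have "\<Phi> (vsmul 0 vzero) = vsmul 0 (\<Phi> vzero)" using assms vzero_FS unfolding addhom_def by blast
  moreover have "vsmul 0 (vzero::'b\<Rightarrow>'k) = vzero" by (simp add: vsmul_def vzero_def)
  moreover have "vsmul 0 (\<Phi> vzero) = vzero" by (simp add: vsmul_def vzero_def fun_eq_iff)
  ultimately show ?thesis by simp
qed

lemma addhom_vadd: "addhom B \<Phi> \<Longrightarrow> f \<in> FS B \<Longrightarrow> g \<in> FS B \<Longrightarrow> \<Phi> (vadd f g) = vadd (\<Phi> f) (\<Phi> g)"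
  unfolding addhom_def by blast
lemma addhom_vsmul: "addhom B \<Phi> \<Longrightarrow> f \<in> FS B \<Longrightarrow> \<Phi> (vsmul c f) = vsmul c (\<Phi> f)"
  unfolding addhom_def by blast

lemma addhom_vsum: fixes F :: "'i \<Rightarrow> 'b \<Rightarrow> 'k::field" assumes "addhom B \<Phi>" "finite S" "\<And>i. i \<in> S \<Longrightarrow> F i \<in> FS B"
  shows "\<Phi> (vsum S F) = vsum S (\<lambda>i. \<Phi> (F i))"
  using assms(2,3)
proof (induction S rule: finite_induct)
  case empty then show ?case using addhom_zero[OF assms(1)] by (simp add: vsum_def vzero_def)
next
  case (insert x F')
  have e: "vsum (insert x F') F = vadd (F x) (vsum F' F)" for F :: "_ \<Rightarrow> _ \<Rightarrow> 'z::field"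
    using insert by (simp add: vsum_def vadd_def)
  have "\<Phi> (vsum (insert x F') F) = vadd (\<Phi> (F x)) (\<Phi> (vsum F' F))"
    unfolding e using insert by (intro addhom_vadd[OF assms(1)]) auto
  also have "\<dots> = vsum (insert x F') (\<lambda>i. \<Phi> (F i))" using insert by (simp add: e)
  finally show ?case .
qed

lemma maps_comp: "maps D E \<Phi> \<Longrightarrow> maps B D \<phi> \<Longrightarrow> maps B E (\<lambda>x. \<Phi> (\<phi> x))"
  unfolding maps_def by blast
lemma addhom_comp: "addhom D \<Phi> \<Longrightarrow> maps B D \<phi> \<Longrightarrow> addhom B \<phi> \<Longrightarrow> addhom B (\<lambda>x. \<Phi> (\<phi> x))"
  unfolding addhom_def maps_def by auto

lemma addhom_id[simp]: "addhom B (\<lambda>x. x)" "addhom B id" unfolding addhom_def by auto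
lemma maps_id[simp]: "maps B B (\<lambda>x. x)" "maps B B id" unfolding maps_def by auto

lemma lext_superset:
  assumes "finite S" "fsupp t \<subseteq> S"
  shows "lext F t = (\<lambda>x. \<Sum>p\<in>S. t p * F p x)"
  unfolding lext_def
proof
  fix x show "(\<Sum>p\<in>fsupp t. t p * F p x) = (\<Sum>p\<in>S. t p * F p x)"
    by (rule sum.mono_neutral_left[OF assms]) (auto simp: fsupp_def)
qed

lemma addhom_lext[simp]: fixes F :: "'b \<Rightarrow> 'd \<Rightarrow> 'k::field" shows "addhom B (lext F)"
  unfolding addhom_def
proof (intro conjI ballI allI)
  fix f g :: "'b \<Rightarrow> 'k" assume f: "f \<in> FS B" and g: "g \<in> FS B"
  let ?S = "fsupp f \<union> fsupp g"
  have fin: "finite ?S" using f g FS_finite by blast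
  have e1: "lext F (vadd f g) = (\<lambda>x. \<Sum>p\<in>?S. vadd f g p * F p x)"
    by (rule lext_superset[OF fin]) (rule fsupp_vadd)
  have e2: "lext F f = (\<lambda>x. \<Sum>p\<in>?S. f p * F p x)"
    by (rule lext_superset[OF fin]) blast
  have e3: "lext F g = (\<lambda>x. \<Sum>p\<in>?S. g p * F p x)"
    by (rule lext_superset[OF fin]) blast
  show "lext F (vadd f g) = vadd (lext F f) (lext F g)"
    unfolding e1 e2 e3 by (simp add: vadd_def distrib_right sum.distrib)
next
  fix c and f :: "'b \<Rightarrow> 'k" assume f: "f \<in> FS B"
  have fin: "finite (fsupp f)" using f FS_finite by blast
  have e1: "lext F (vsmul c f) = (\<lambda>x. \<Sum>p\<in>fsupp f. vsmul c f p * F p x)"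
    by (rule lext_superset[OF fin]) (rule fsupp_vsmul)
  show "lext F (vsmul c f) = vsmul c (lext F f)"
    unfolding e1 by (simp add: vsmul_def lext_def sum_distrib_left mult.assoc)
qed

lemma lext_bvec[simp]: "lext F (bvec b :: _ \<Rightarrow> 'k::field) = F b"
  by (simp only: lext_def fsupp_bvec) (simp add: bvec_def)

lemma maps_lext: fixes F :: "'b \<Rightarrow> 'd \<Rightarrow> 'k::field" assumes "\<And>p. p \<in> B \<Longrightarrow> (F p :: _ \<Rightarrow> 'k::field) \<in> FS D" shows "maps B D (lext F)"
  unfolding maps_def
proof
  fix t :: "'b \<Rightarrow> 'k" assume t: "t \<in> FS B"
  have fin: "finite (fsupp t)" and sub: "fsupp t \<subseteq> B" using t by (auto simp: FS_def)
  have "lext F t = vsum (fsupp t) (\<lambda>p. vsmul (t p) (F p))"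
    unfolding lext_def vsum_def vsmul_def by simp
  also have "\<dots> \<in> FS D" using fin sub assms by (intro vsum_FS vsmul_FS) auto
  finally show "lext F t \<in> FS D" .
qed

lemma lext_cong: "(t :: _ \<Rightarrow> 'k::field) \<in> FS B \<Longrightarrow> (\<And>p. p \<in> B \<Longrightarrow> F p = G p) \<Longrightarrow> lext F t = lext G t"
proof -
  assume t: "t \<in> FS B" and FG: "\<And>p. p \<in> B \<Longrightarrow> F p = G p"
  have "\<And>p. p \<in> fsupp t \<Longrightarrow> F p = G p" using FS_sub[OF t] FG by blast
  then show ?thesis unfolding lext_def by (intro ext sum.cong) simp_all
qed

lemma decomp:
  assumes "addhom B \<Phi>" "(t :: _ \<Rightarrow> 'k::field) \<in> FS B"
  shows "\<Phi> t = lext (\<lambda>p. \<Phi> (bvec p)) t"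
proof -
  have "\<forall>t. t \<in> FS B \<and> fsupp t = S \<longrightarrow> \<Phi> t = lext (\<lambda>p. \<Phi> (bvec p)) t" if "finite S" for S
    using that
  proof (induction S rule: finite_induct)
    case empty
    show ?case
    proof (intro allI impI)
      fix t :: "_ \<Rightarrow> 'k" assume "t \<in> FS B \<and> fsupp t = {}"
      then have "t = vzero" by (auto simp: fsupp_def vzero_def fun_eq_iff)
      then show "\<Phi> t = lext (\<lambda>p. \<Phi> (bvec p)) t"
        using addhom_zero[OF assms(1)] by (simp add: lext_def fsupp_def vzero_def)
    qed
  next
    case (insert p S)
    show ?case
    proof (intro allI impI)
      fix t :: "_ \<Rightarrow> 'k" assume H: "t \<in> FS B \<and> fsupp t = insert p S"
      define t' where "t' = t(p := 0)"
      have pB: "p \<in> B" using H by (auto simp: FS_def)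
      have ft': "fsupp t' = S" using H insert(2) unfolding t'_def fsupp_def by auto
      have t'FS: "t' \<in> FS B" using H ft' insert(1) unfolding FS_def by auto
      have tt: "t = vadd t' (vsmul (t p) (bvec p))"
        unfolding t'_def vadd_def vsmul_def bvec_def by (auto simp: fun_eq_iff)
      have "\<Phi> t = \<Phi> (vadd t' (vsmul (t p) (bvec p)))" by (rule arg_cong[OF tt])
      also have "\<dots> = vadd (\<Phi> t') (vsmul (t p) (\<Phi> (bvec p)))"
        using t'FS pB by (simp add: addhom_vadd[OF assms(1)] addhom_vsmul[OF assms(1)])
      also have "\<Phi> t' = lext (\<lambda>p. \<Phi> (bvec p)) t'" using insert.IH t'FS ft' by blast
      also have "vsmul (t p) (\<Phi> (bvec p)) = lext (\<lambda>p. \<Phi> (bvec p)) (vsmul (t p) (bvec p))"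
        using pB by (simp add: addhom_vsmul[OF addhom_lext])
      also have "vadd (lext (\<lambda>p. \<Phi> (bvec p)) t') \<dots> = lext (\<lambda>p. \<Phi> (bvec p)) (vadd t' (vsmul (t p) (bvec p)))"
        using t'FS pB by (simp add: addhom_vadd[OF addhom_lext])
      also have "\<dots> = lext (\<lambda>p. \<Phi> (bvec p)) t" by (rule arg_cong[OF tt[symmetric]])
      finally show "\<Phi> t = lext (\<lambda>p. \<Phi> (bvec p)) t" .
    qed
  qed
  then show ?thesis using assms(2) FS_def by blast
qed

lemma ext_basis:
  assumes "addhom B \<Phi>" "addhom B \<Psi>" "\<And>b. b \<in> B \<Longrightarrow> \<Phi> (bvec b) = \<Psi> (bvec b)" "(t :: _ \<Rightarrow> 'k::field) \<in> FS B"
  shows "\<Phi> t = \<Psi> t"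
  using decomp[OF assms(1,4)] decomp[OF assms(2,4)] lext_cong[OF assms(4), of "\<lambda>p. \<Phi> (bvec p)" "\<lambda>p. \<Psi> (bvec p)"]
    assms(3) by simp


definition gaddhom :: "(('b \<Rightarrow> 'k::field) \<Rightarrow> ('d \<Rightarrow> 'k)) \<Rightarrow> bool" where
  "gaddhom \<Phi> \<longleftrightarrow> (\<forall>f g. \<Phi> (vadd f g) = vadd (\<Phi> f) (\<Phi> g)) \<and> (\<forall>c f. \<Phi> (vsmul c f) = vsmul c (\<Phi> f))"

lemma gaddhom_addhom: "gaddhom \<Phi> \<Longrightarrow> addhom B \<Phi>"
  unfolding gaddhom_def addhom_def by blast

lemma addhom_comp_g: "gaddhom \<Phi> \<Longrightarrow> addhom B \<phi> \<Longrightarrow> addhom B (\<lambda>x. \<Phi> (\<phi> x))"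
  unfolding gaddhom_def addhom_def by auto

lemma gaddhom_vsum:
  assumes "gaddhom \<Phi>" "finite S"
  shows "\<Phi> (vsum S F) = vsum S (\<lambda>i. \<Phi> (F i))"
  using assms(2)
proof (induction S rule: finite_induct)
  case empty
  have "\<Phi> (vsmul 0 vzero) = vsmul 0 (\<Phi> vzero)" using assms(1) unfolding gaddhom_def by blast
  then show ?case by (simp add: vsum_def vsmul_def vzero_def)
next
  case (insert x F')
  have e: "vsum (insert x F') F = vadd (F x) (vsum F' F)" for F :: "_ \<Rightarrow> _ \<Rightarrow> 'z::field"
    using insert by (simp add: vsum_def vadd_def)
  show ?case unfolding e using insert assms(1) unfolding gaddhom_def by simp
qed

lemma gaddhom_tens_r[simp]: "gaddhom (tens u)"
  unfolding gaddhom_def tens_def vadd_def vsmul_def by (auto simp: fun_eq_iff algebra_simps)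
lemma gaddhom_tens_l[simp]: "gaddhom (\<lambda>x. tens x v)"
  unfolding gaddhom_def tens_def vadd_def vsmul_def by (auto simp: fun_eq_iff algebra_simps)
lemma gaddhom_assocr[simp]: "gaddhom assocr"
  unfolding gaddhom_def assocr_def vadd_def vsmul_def by (auto simp: fun_eq_iff)
lemma gaddhom_assocl[simp]: "gaddhom assocl"
  unfolding gaddhom_def assocl_def vadd_def vsmul_def by (auto simp: fun_eq_iff)
lemma gaddhom_ins_mid[simp]: "gaddhom (ins_mid v)"
  unfolding gaddhom_def ins_mid_def vadd_def vsmul_def by (auto simp: fun_eq_iff algebra_simps)
lemma gaddhom_vsmul_scalar: "gaddhom (\<lambda>x. vsmul c x)"
  unfolding gaddhom_def vadd_def vsmul_def by (auto simp: fun_eq_iff algebra_simps)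

lemma addhom_tens_rr: "addhom B \<phi> \<Longrightarrow> addhom B (\<lambda>x. tens u (\<phi> x))"
  by (rule addhom_comp_g[OF gaddhom_tens_r])
lemma addhom_tens_ll: "addhom B \<phi> \<Longrightarrow> addhom B (\<lambda>x. tens (\<phi> x) v)"
  by (rule addhom_comp_g[OF gaddhom_tens_l])

lemma maps_tens_r: "u \<in> FS B \<Longrightarrow> maps D (B \<times> D) (tens (u :: _ \<Rightarrow> 'k::field))"
  unfolding maps_def by auto
lemma maps_tens_l: "v \<in> FS D \<Longrightarrow> maps B (B \<times> D) (\<lambda>x. tens x (v :: _ \<Rightarrow> 'k::field))"
  unfolding maps_def by auto

lemma tmap_lext: "tmap \<phi> \<chi> = lext (\<lambda>p. tens (\<phi> (bvec (fst p))) (\<chi> (bvec (snd p))))"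
  by (intro ext) (auto simp: tmap_def lext_def tens_def split: prod.splits)

lemma addhom_tmap[simp]: "addhom B (tmap \<phi> \<chi>)"
  unfolding tmap_lext by (rule addhom_lext)

lemma tmap_bvec: fixes \<phi> :: "('b \<Rightarrow> 'k::field) \<Rightarrow> ('d \<Rightarrow> 'k)" shows "tmap \<phi> \<chi> (bvec (b, e)) = tens (\<phi> (bvec b)) (\<chi> (bvec e))"
  unfolding tmap_lext by simp

lemma tmap_bvec2: fixes \<phi> :: "('b \<Rightarrow> 'k::field) \<Rightarrow> ('d \<Rightarrow> 'k)"
  shows "tmap \<phi> \<chi> (tens (bvec b) (bvec e)) = tens (\<phi> (bvec b)) (\<chi> (bvec e))"
  using tmap_bvec[of \<phi> \<chi> b e] by (simp add: bvec_pair)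

lemma maps_tmap: fixes \<phi> :: "('b \<Rightarrow> 'k::field) \<Rightarrow> ('d \<Rightarrow> 'k)" shows "maps B D \<phi> \<Longrightarrow> maps E G \<chi> \<Longrightarrow> maps (B \<times> E) (D \<times> G) (tmap \<phi> \<chi>)"
  unfolding tmap_lext by (rule maps_lext) (auto simp: maps_def)

lemma tmap_FS: fixes \<phi> :: "('b \<Rightarrow> 'k::field) \<Rightarrow> ('d \<Rightarrow> 'k)" shows "maps B D \<phi> \<Longrightarrow> maps E G \<chi> \<Longrightarrow> t \<in> FS (B \<times> E) \<Longrightarrow> tmap \<phi> \<chi> t \<in> FS (D \<times> G)"
  using maps_tmap unfolding maps_def by blast

lemma tmap_cong:
  fixes \<phi> :: "('b \<Rightarrow> 'k::field) \<Rightarrow> ('d \<Rightarrow> 'k)" assumes "t \<in> FS (B \<times> E)" "\<And>b. b \<in> B \<Longrightarrow> \<phi> (bvec b) = \<phi>' (bvec b)" "\<And>e. e \<in> E \<Longrightarrow> \<chi> (bvec e) = \<chi>' (bvec e)"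
  shows "tmap \<phi> \<chi> t = tmap \<phi>' \<chi>' t"
  unfolding tmap_lext using assms by (intro lext_cong[OF assms(1)]) auto

lemma tmap_tens_bvec: fixes \<phi> :: "('b \<Rightarrow> 'k::field) \<Rightarrow> ('d \<Rightarrow> 'k)"
  assumes "addhom E \<chi>" "v \<in> FS E"
  shows "tmap \<phi> \<chi> (tens (bvec b) v) = tens (\<phi> (bvec b)) (\<chi> v)"
  apply (rule ext_basis[where B=E and \<Phi>="\<lambda>v. tmap \<phi> \<chi> (tens (bvec b) v)" and \<Psi>="\<lambda>v. tens (\<phi> (bvec b)) (\<chi> v)"])
  apply (rule addhom_comp[OF addhom_tmap])
    apply (rule maps_tens_r[of _ "{b}"], simp)
   apply (simp add: gaddhom_addhom)
  apply (rule addhom_tens_rr; simp add: assms)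
  apply (simp add: tmap_bvec flip: bvec_pair)
  by (simp add: assms)

lemma tmap_tens:
  fixes \<phi> :: "('b \<Rightarrow> 'k::field) \<Rightarrow> ('d \<Rightarrow> 'k)" assumes "addhom B \<phi>" "addhom E \<chi>" "u \<in> FS B" "v \<in> FS E"
  shows "tmap \<phi> \<chi> (tens u v) = tens (\<phi> u) (\<chi> v)"
  apply (rule ext_basis[where \<Phi>="\<lambda>u. tmap \<phi> \<chi> (tens u v)" and \<Psi>="\<lambda>u. tens (\<phi> u) (\<chi> v)" and B=B])
  apply (rule addhom_comp[OF addhom_tmap])
    apply (rule maps_tens_l[OF assms(4)])
   apply (simp add: gaddhom_addhom)
  apply (rule addhom_tens_ll; simp add: assms)
  apply (rule tmap_tens_bvec[OF assms(2,4)])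
  by (simp add: assms)

lemma tmap_comp:
  fixes \<phi> :: "('b \<Rightarrow> 'k::field) \<Rightarrow> ('d \<Rightarrow> 'k)" assumes "maps B D \<phi>" "maps E G \<chi>" "addhom D \<phi>'" "addhom G \<chi>'" "t \<in> FS (B \<times> E)"
  shows "tmap \<phi>' \<chi>' (tmap \<phi> \<chi> t) = tmap (\<lambda>x. \<phi>' (\<phi> x)) (\<lambda>x. \<chi>' (\<chi> x)) t"
  apply (rule ext_basis[where B="B \<times> E"])
  apply (rule addhom_comp[OF addhom_tmap])
    apply (rule maps_tmap[OF assms(1,2)])
   apply simp
  apply simp
  using assms by (auto simp: tmap_bvec maps_def intro!: tmap_tens)

lemma tmap_id: "(t :: _ \<Rightarrow> 'k::field) \<in> FS (B \<times> E) \<Longrightarrow> tmap (\<lambda>x. x) (\<lambda>x. x) t = t"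
  by (rule ext_basis[where B="B \<times> E"]) (auto simp: tmap_bvec2 bvec_pair)

lemma tmap_id': "(t :: _ \<Rightarrow> 'k::field) \<in> FS (B \<times> E) \<Longrightarrow> tmap id id t = t"
  unfolding id_def by (rule tmap_id)

lemma fsupp_assocr: "fsupp (assocr t) = (\<lambda>((x,y),z). (x,(y,z))) ` fsupp t"
  unfolding fsupp_def assocr_def by (auto simp: image_iff split: prod.splits)
lemma fsupp_assocl: "fsupp (assocl t) = (\<lambda>(x,(y,z)). ((x,y),z)) ` fsupp t"
  unfolding fsupp_def assocl_def by (auto simp: image_iff split: prod.splits)

lemma assocr_FS[intro]: "t \<in> FS ((B \<times> E) \<times> F) \<Longrightarrow> assocr (t :: _ \<Rightarrow> 'k::field) \<in> FS (B \<times> (E \<times> F))"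
proof -
  assume t: "t \<in> FS ((B \<times> E) \<times> F)"
  have e: "fsupp (assocr t) = (\<lambda>((x,y),z). (x,(y,z))) ` fsupp t" by (rule fsupp_assocr)
  show ?thesis using t by (auto simp: FS_def e)
qed
lemma assocl_FS[intro]: "t \<in> FS (B \<times> (E \<times> F)) \<Longrightarrow> assocl (t :: _ \<Rightarrow> 'k::field) \<in> FS ((B \<times> E) \<times> F)"
proof -
  assume t: "t \<in> FS (B \<times> (E \<times> F))"
  have e: "fsupp (assocl t) = (\<lambda>(x,(y,z)). ((x,y),z)) ` fsupp t" by (rule fsupp_assocl)
  show ?thesis using t by (auto simp: FS_def e)
qed
lemma maps_assocr: "maps ((B \<times> E) \<times> F) (B \<times> (E \<times> F)) (assocr :: _ \<Rightarrow> _ \<Rightarrow> 'k::field)"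
  unfolding maps_def by auto
lemma maps_assocl: "maps (B \<times> (E \<times> F)) ((B \<times> E) \<times> F) (assocl :: _ \<Rightarrow> _ \<Rightarrow> 'k::field)"
  unfolding maps_def by auto

lemma assocl_assocr[simp]: "assocl (assocr t) = t"
  unfolding assocl_def assocr_def by (auto simp: fun_eq_iff)
lemma assocr_assocl[simp]: "assocr (assocl t) = t"
  unfolding assocl_def assocr_def by (auto simp: fun_eq_iff)
lemma assocr_tens[simp]: "assocr (tens (tens (u :: _ \<Rightarrow> 'k::field) v) w) = tens u (tens v w)"
  unfolding assocr_def tens_def by (auto simp: fun_eq_iff mult.assoc)
lemma assocl_tens[simp]: "assocl (tens (u :: _ \<Rightarrow> 'k::field) (tens v w)) = tens (tens u v) w"
  unfolding assocl_def tens_def by (auto simp: fun_eq_iff mult.assoc)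

lemma assocr_bvec: "assocr (bvec ((x,y),z) :: _ \<Rightarrow> 'k::field) = bvec (x,(y,z))"
  unfolding assocr_def bvec_def by (auto simp: fun_eq_iff)

lemma assocr_tmap:
  assumes "(t :: _ \<Rightarrow> 'k::field) \<in> FS ((B \<times> E) \<times> F)"
  shows "assocr (tmap (tmap \<phi> \<chi>) \<omega> t) = tmap \<phi> (tmap \<chi> \<omega>) (assocr t)"
  apply (rule ext_basis[where B="(B \<times> E) \<times> F" and \<Phi>="\<lambda>t. assocr (tmap (tmap \<phi> \<chi>) \<omega> t)"
        and \<Psi>="\<lambda>t. tmap \<phi> (tmap \<chi> \<omega>) (assocr t)"])
  apply (rule addhom_comp_g[where \<Phi>=assocr and \<phi>="tmap (tmap \<phi> \<chi>) \<omega>"]; simp)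
  apply (rule addhom_comp[OF addhom_tmap])
    apply (rule maps_assocr)
   apply (simp add: gaddhom_addhom)
  apply (clarsimp simp: tmap_bvec assocr_bvec)
  by (rule assms)

lemma assocl_tmap:
  assumes "(t :: _ \<Rightarrow> 'k::field) \<in> FS (B \<times> (E \<times> F))"
  shows "assocl (tmap \<phi> (tmap \<chi> \<omega>) t) = tmap (tmap \<phi> \<chi>) \<omega> (assocl t)"
proof -
  have "assocl t \<in> FS ((B \<times> E) \<times> F)" using assms by auto
  from assocr_tmap[OF this, of \<phi> \<chi> \<omega>] show ?thesis
    by (metis assocl_assocr assocr_assocl)
qed

lemma assocl_tens_gen:
  assumes "(w :: _ \<Rightarrow> 'k::field) \<in> FS (E \<times> F)"
  shows "assocl (tens u w) = tmap (tens u) (\<lambda>x. x) w"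
  apply (rule ext_basis[where B="E \<times> F" and \<Phi>="\<lambda>w. assocl (tens u w)" and \<Psi>="tmap (tens u) (\<lambda>x. x)"])
  apply (rule addhom_comp_g[where \<Phi>=assocl and \<phi>="tens u"]; simp add: gaddhom_addhom)
  apply simp
  apply (clarsimp simp: tmap_bvec2 bvec_pair)
  by (rule assms)

lemma assocr_tens_gen:
  assumes "(s :: _ \<Rightarrow> 'k::field) \<in> FS (B \<times> E)"
  shows "assocr (tens s a) = tmap (\<lambda>x. x) (\<lambda>c. tens c a) s"
  apply (rule ext_basis[where B="B \<times> E" and \<Phi>="\<lambda>s. assocr (tens s a)" and \<Psi>="tmap (\<lambda>x. x) (\<lambda>c. tens c a)"])
  apply (rule addhom_comp_g[where \<Phi>=assocr and \<phi>="\<lambda>s. tens s a"]; simp add: gaddhom_addhom)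
  apply simp
  apply (clarsimp simp: tmap_bvec2 bvec_pair)
  by (rule assms)

lemma tens_vsum_l: "tens (vsum S (F :: _ \<Rightarrow> _ \<Rightarrow> 'k::field)) v = vsum S (\<lambda>i. tens (F i) v)"
  unfolding tens_def vsum_def by (auto simp: fun_eq_iff sum_distrib_right)
lemma tens_vsum_r: "tens (u :: _ \<Rightarrow> 'k::field) (vsum S F) = vsum S (\<lambda>i. tens u (F i))"
  unfolding tens_def vsum_def by (auto simp: fun_eq_iff sum_distrib_left)

lemma sum_delta2: assumes "finite S"
  shows "(\<Sum>i\<in>S. (if x = i then 1 else 0) * (if y = i then 1 else (0::'k::field))) = (if x = y \<and> x \<in> S then 1 else 0)"
proof -
  have "(\<Sum>i\<in>S. (if x = i then 1 else 0) * (if y = i then 1 else (0::'k))) =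
        (\<Sum>i\<in>S. if i = x then (if y = x then 1 else 0) else (0::'k))"
    by (rule sum.cong) auto
  also have "\<dots> = (if x = y \<and> x \<in> S then 1 else 0)"
    using assms by (simp add: sum.delta)
  finally show ?thesis .
qed

lemma coev_vsum: assumes fin: "finite BA"
  shows "(coev BA :: _ \<Rightarrow> 'k::field) = vsum BA (\<lambda>b. tens (bvec b) (bvec b))"
  by (auto simp: fun_eq_iff coev_def vsum_def tens_def bvec_def sum_delta2 fin)

lemma ins_mid_vsum: "ins_mid (vsum S F :: _ \<Rightarrow> 'k::field) s = vsum S (\<lambda>i. ins_mid (F i) s)"
  unfolding ins_mid_def vsum_def by (auto simp: fun_eq_iff sum_distrib_left)

lemma ins_mid_tens: "ins_mid (tens (bvec b) (bvec b) :: _ \<Rightarrow> 'k::field) (tens s1 s2) = tens (tens s1 (bvec b)) (tens (bvec b) s2)"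
  unfolding ins_mid_def tens_def by (auto simp: fun_eq_iff)

lemma ins_mid_coev_tens:
  "finite BA \<Longrightarrow> ins_mid (coev BA :: _ \<Rightarrow> 'k::field) (tens s1 s2) = vsum BA (\<lambda>b. tens (tens s1 (bvec b)) (tens (bvec b) s2))"
  by (simp add: coev_vsum ins_mid_vsum ins_mid_tens)

lemma econtr_r_lext: "econtr_r e = lext (\<lambda>p. vsmul (e (bvec (snd p))) (bvec (fst p)))"
  by (intro ext) (auto simp: econtr_r_def lext_def vsmul_def bvec_def intro!: sum.cong)

lemma lfun_vsmul: "lfun_on D e \<Longrightarrow> addhom D (\<lambda>v. vsmul (e v) x)"
  unfolding lfun_on_def addhom_def vsmul_def vadd_def by (auto simp: fun_eq_iff algebra_simps)

lemma econtr_r_tens: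
  fixes e :: "('d \<Rightarrow> 'k::field) \<Rightarrow> 'k"
  assumes "lfun_on D e" "u \<in> FS B" "v \<in> FS D"
  shows "econtr_r e (tens u v) = vsmul (e v) u"
proof -
  have A: "econtr_r e (tens (bvec b) v) = vsmul (e v) (bvec b)" for b
    apply (rule ext_basis[where B=D and \<Phi>="\<lambda>v. econtr_r e (tens (bvec b) v)" and \<Psi>="\<lambda>v. vsmul (e v) (bvec b)"])
    apply (unfold econtr_r_lext)
       apply (rule addhom_comp[OF addhom_lext])
        apply (rule maps_tens_r[of _ "{b}"], simp)
       apply (simp add: gaddhom_addhom)
      apply (rule lfun_vsmul[OF assms(1)])
     apply (simp add: bvec_pair[symmetric])
    by (rule assms(3))
  show ?thesis
    apply (rule ext_basis[where B=B and \<Phi>="\<lambda>u. econtr_r e (tens u v)" and \<Psi>="\<lambda>u. vsmul (e v) u"])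
    apply (unfold econtr_r_lext)
       apply (rule addhom_comp[OF addhom_lext])
        apply (rule maps_tens_l[OF assms(3)])
       apply (simp add: gaddhom_addhom)
      apply (rule gaddhom_addhom[OF gaddhom_vsmul_scalar])
     apply (simp add: A[unfolded econtr_r_lext])
    by (rule assms(2))
qed


lemma lin_comp: "linear_on D E \<Phi> \<Longrightarrow> linear_on B D \<phi> \<Longrightarrow> linear_on B E (\<lambda>x. \<Phi> (\<phi> x))"
  unfolding linear_on_iff using maps_comp addhom_comp by blast
lemma lin_add: "linear_on B D \<phi> \<Longrightarrow> addhom B \<phi>"
  unfolding linear_on_iff by blast
lemma lin_maps: "linear_on B D \<phi> \<Longrightarrow> maps B D \<phi>"
  unfolding linear_on_iff by blast
lemma lin_FS: "linear_on B D \<phi> \<Longrightarrow> x \<in> FS B \<Longrightarrow> \<phi> x \<in> FS D"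
  unfolding linear_on_def by blast
lemma lin_tmap: fixes \<phi> :: "('b \<Rightarrow> 'k::field) \<Rightarrow> ('d \<Rightarrow> 'k)"
  shows "linear_on B D \<phi> \<Longrightarrow> linear_on E G \<chi> \<Longrightarrow> linear_on (B \<times> E) (D \<times> G) (tmap \<phi> \<chi>)"
  unfolding linear_on_iff using maps_tmap by auto
lemma lin_id: "linear_on B B (\<lambda>x. x :: _ \<Rightarrow> 'k::field)" "linear_on B B (id :: (_ \<Rightarrow> 'k::field) \<Rightarrow> _)"
  unfolding linear_on_iff by auto
lemma lin_assocr: "linear_on ((B \<times> E) \<times> F) (B \<times> (E \<times> F)) (assocr :: _ \<Rightarrow> _ \<Rightarrow> 'k::field)"
  unfolding linear_on_iff using maps_assocr gaddhom_addhom gaddhom_assocr by blast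
lemma lin_assocl: "linear_on (B \<times> (E \<times> F)) ((B \<times> E) \<times> F) (assocl :: _ \<Rightarrow> _ \<Rightarrow> 'k::field)"
  unfolding linear_on_iff using maps_assocl gaddhom_addhom gaddhom_assocl by blast
lemma lin_tens_r: "u \<in> FS B \<Longrightarrow> linear_on D (B \<times> D) (tens (u :: _ \<Rightarrow> 'k::field))"
  unfolding linear_on_iff using maps_tens_r gaddhom_addhom gaddhom_tens_r by blast
lemma lin_tens_l: "v \<in> FS D \<Longrightarrow> linear_on B (B \<times> D) (\<lambda>x. tens x (v :: _ \<Rightarrow> 'k::field))"
  unfolding linear_on_iff using maps_tens_l gaddhom_addhom gaddhom_tens_l by blast
lemma lin_lext: fixes F :: "'b \<Rightarrow> 'd \<Rightarrow> 'k::field"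
  shows "(\<And>p. p \<in> B \<Longrightarrow> F p \<in> FS D) \<Longrightarrow> linear_on B D (lext F)"
  unfolding linear_on_iff using maps_lext addhom_lext by blast

lemma fsupp_ins_mid: "fsupp (ins_mid v s :: _ \<Rightarrow> 'k::field) \<subseteq> (\<lambda>((c1,c2),(a,b)). ((c1,a),(b,c2))) ` (fsupp s \<times> fsupp v)"
  unfolding fsupp_def ins_mid_def by (auto simp: image_iff)

lemma lin_ins_mid:
  assumes "(v :: _ \<Rightarrow> 'k::field) \<in> FS (A1 \<times> A2)"
  shows "linear_on (C1 \<times> C2) ((C1 \<times> A1) \<times> (A2 \<times> C2)) (ins_mid v)"
  unfolding linear_on_iff
proof
  show "maps (C1 \<times> C2) ((C1 \<times> A1) \<times> (A2 \<times> C2)) (ins_mid v)"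
    unfolding maps_def
  proof
    fix s :: "_ \<Rightarrow> 'k" assume s: "s \<in> FS (C1 \<times> C2)"
    have f: "finite ((\<lambda>((c1,c2),(a,b)). ((c1,a),(b,c2))) ` (fsupp s \<times> fsupp v))"
      using s assms by (simp add: FS_def)
    have sub: "(\<lambda>((c1,c2),(a,b)). ((c1,a),(b,c2))) ` (fsupp s \<times> fsupp v) \<subseteq> (C1 \<times> A1) \<times> (A2 \<times> C2)"
      using s assms by (auto simp: FS_def)
    show "ins_mid v s \<in> FS ((C1 \<times> A1) \<times> (A2 \<times> C2))"
      unfolding FS_def using fsupp_ins_mid[of v s] f sub by (auto intro: finite_subset)
  qed
  show "addhom (C1 \<times> C2) (ins_mid v)" by (simp add: gaddhom_addhom)
qed

lemma coev_FS: "finite BA \<Longrightarrow> (coev BA :: _ \<Rightarrow> 'k::field) \<in> FS (BA \<times> BA)"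
  by (simp add: coev_vsum vsum_FS)

lemma lext_lin_F:
  fixes F :: "('e \<Rightarrow> 'k::field) \<Rightarrow> 'b \<Rightarrow> 'd \<Rightarrow> 'k"
  assumes "\<And>p. p \<in> B \<Longrightarrow> addhom D (\<lambda>w. F w p)" "(s :: 'b \<Rightarrow> 'k) \<in> FS B"
  shows "addhom D (\<lambda>w. lext (F w) s)"
  unfolding addhom_def
proof (intro conjI ballI allI)
  have sub: "fsupp s \<subseteq> B" using assms(2) FS_sub by blast
  fix f g :: "'e \<Rightarrow> 'k" assume f: "f \<in> FS D" and g: "g \<in> FS D"
  have "\<And>p. p \<in> fsupp s \<Longrightarrow> F (vadd f g) p = vadd (F f p) (F g p)"
    using assms(1) sub f g addhom_vadd by blast
  then show "lext (F (vadd f g)) s = vadd (lext (F f) s) (lext (F g) s)"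
    unfolding lext_def vadd_def by (auto simp: fun_eq_iff distrib_left sum.distrib intro!: sum.cong)
next
  have sub: "fsupp s \<subseteq> B" using assms(2) FS_sub by blast
  fix c and f :: "'e \<Rightarrow> 'k" assume f: "f \<in> FS D"
  have "\<And>p. p \<in> fsupp s \<Longrightarrow> F (vsmul c f) p = vsmul c (F f p)"
    using assms(1) sub f addhom_vsmul by blast
  then show "lext (F (vsmul c f)) s = vsmul c (lext (F f) s)"
    unfolding lext_def vsmul_def by (auto simp: fun_eq_iff sum_distrib_left mult_ac intro!: sum.cong)
qed




context
  fixes Ob :: "'o set" and Cb :: "'o \<Rightarrow> 'o \<Rightarrow> 'c set"
    and \<delta> :: "'o \<Rightarrow> 'o \<Rightarrow> 'o \<Rightarrow> ('c \<Rightarrow> 'k::field) \<Rightarrow> ('c \<times> 'c \<Rightarrow> 'k)"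
    and \<epsilon> :: "'o \<Rightarrow> ('c \<Rightarrow> 'k) \<Rightarrow> 'k"
    and BA :: "'a set" and mu :: "('a \<times> 'a \<Rightarrow> 'k) \<Rightarrow> ('a \<Rightarrow> 'k)" and one :: "'a \<Rightarrow> 'k"
    and \<psi> :: "'o \<Rightarrow> 'o \<Rightarrow> ('c \<times> 'a \<Rightarrow> 'k) \<Rightarrow> ('a \<times> 'c \<Rightarrow> 'k)"
    and BM :: "'o \<Rightarrow> 'm set" and \<rho> :: "'o \<Rightarrow> 'o \<Rightarrow> ('m \<Rightarrow> 'k) \<Rightarrow> ('m \<times> 'c \<Rightarrow> 'k)"
    and act :: "'o \<Rightarrow> ('m \<times> 'a \<Rightarrow> 'k) \<Rightarrow> ('m \<Rightarrow> 'k)"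
  assumes cA: "comodA Ob Cb \<delta> \<epsilon> BA mu one \<psi> BM \<rho> act"
begin

lemma cA_rho_lin: "X \<in> Ob \<Longrightarrow> Y \<in> Ob \<Longrightarrow> linear_on (BM X) (BM Y \<times> Cb X Y) (\<rho> X Y)"
  using cA unfolding comodA_def comod_def by blast
lemma cA_act_lin: "X \<in> Ob \<Longrightarrow> linear_on (BM X \<times> BA) (BM X) (act X)"
  using cA unfolding comodA_def by blast
lemma cA_assoc: "X \<in> Ob \<Longrightarrow> t \<in> FS ((BM X \<times> BA) \<times> BA) \<Longrightarrow>
    act X (tmap (act X) (\<lambda>x. x) t) = act X (tmap (\<lambda>x. x) mu (assocr t))"
  using cA unfolding comodA_def id_def by blast
lemma cA_unit: "X \<in> Ob \<Longrightarrow> m \<in> FS (BM X) \<Longrightarrow> act X (tens m one) = m"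
  using cA unfolding comodA_def by blast
lemma cA_compat: "X \<in> Ob \<Longrightarrow> Y \<in> Ob \<Longrightarrow> t \<in> FS (BM X \<times> BA) \<Longrightarrow>
    \<rho> X Y (act X t) = tmap (act Y) (\<lambda>x. x) (assocl (tmap (\<lambda>x. x) (\<psi> X Y) (assocr (tmap (\<rho> X Y) (\<lambda>x. x) t))))"
  using cA unfolding comodA_def id_def by blast
lemma cA_coassoc: "X \<in> Ob \<Longrightarrow> Y \<in> Ob \<Longrightarrow> Z \<in> Ob \<Longrightarrow> m \<in> FS (BM X) \<Longrightarrow>
    assocr (tmap (\<rho> Z Y) (\<lambda>x. x) (\<rho> X Z m)) = tmap (\<lambda>x. x) (\<delta> X Z Y) (\<rho> X Y m)"
  using cA unfolding comodA_def comod_def id_def by blast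
lemma cA_counit: "X \<in> Ob \<Longrightarrow> m \<in> FS (BM X) \<Longrightarrow> econtr_r (\<epsilon> X) (\<rho> X X m) = m"
  using cA unfolding comodA_def comod_def by blast

lemma act_assoc_tens:
  assumes "X \<in> Ob" "n \<in> FS (BM X)" "x \<in> FS BA" "y \<in> FS BA" "linear_on (BA \<times> BA) BA mu"
  shows "act X (tens (act X (tens n x)) y) = act X (tens n (mu (tens x y)))"
proof -
  have t: "tens (tens n x) y \<in> FS ((BM X \<times> BA) \<times> BA)" using assms by auto
  have e1: "tmap (act X) (\<lambda>x. x) (tens (tens n x) y) = tens (act X (tens n x)) y"
    by (rule tmap_tens[OF lin_add[OF cA_act_lin[OF assms(1)]] addhom_id(1)]) (use assms in auto)
  have e2: "tmap (\<lambda>x. x) mu (tens n (tens x y)) = tens n (mu (tens x y))"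
    by (rule tmap_tens[OF addhom_id(1) lin_add[OF assms(5)]]) (use assms in auto)
  have "act X (tens (act X (tens n x)) y) = act X (tmap (act X) (\<lambda>x. x) (tens (tens n x) y))"
    by (simp only: e1)
  also have "\<dots> = act X (tmap (\<lambda>x. x) mu (assocr (tens (tens n x) y)))" using cA_assoc[OF assms(1) t] .
  also have "\<dots> = act X (tens n (mu (tens x y)))"
    by (simp only: assocr_tens e2)
  finally show ?thesis .
qed

end

context
  fixes Ob :: "'o set" and Cb :: "'o \<Rightarrow> 'o \<Rightarrow> 'c set"
    and BA :: "'a set"
    and BM :: "'o \<Rightarrow> 'm set" and \<rho>M :: "'o \<Rightarrow> 'o \<Rightarrow> ('m \<Rightarrow> 'k::field) \<Rightarrow> ('m \<times> 'c \<Rightarrow> 'k)"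
    and actM :: "'o \<Rightarrow> ('m \<times> 'a \<Rightarrow> 'k) \<Rightarrow> ('m \<Rightarrow> 'k)"
    and BN :: "'o \<Rightarrow> 'n set" and \<rho>N :: "'o \<Rightarrow> 'o \<Rightarrow> ('n \<Rightarrow> 'k) \<Rightarrow> ('n \<times> 'c \<Rightarrow> 'k)"
    and actN :: "'o \<Rightarrow> ('n \<times> 'a \<Rightarrow> 'k) \<Rightarrow> ('n \<Rightarrow> 'k)"
    and \<phi> :: "'o \<Rightarrow> ('m \<Rightarrow> 'k) \<Rightarrow> ('n \<Rightarrow> 'k)"
begin

lemma ch_lin: "comod_hom Ob Cb BM \<rho>M BN \<rho>N \<phi> \<Longrightarrow> X \<in> Ob \<Longrightarrow> linear_on (BM X) (BN X) (\<phi> X)"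
  unfolding comod_hom_def by blast
lemma ch_comm: "comod_hom Ob Cb BM \<rho>M BN \<rho>N \<phi> \<Longrightarrow> X \<in> Ob \<Longrightarrow> Y \<in> Ob \<Longrightarrow> m \<in> FS (BM X) \<Longrightarrow>
   \<rho>N X Y (\<phi> X m) = tmap (\<phi> Y) (\<lambda>x. x) (\<rho>M X Y m)"
  unfolding comod_hom_def id_def by blast
lemma cAh_ch: "comodA_hom Ob Cb BA BM \<rho>M actM BN \<rho>N actN \<phi> \<Longrightarrow> comod_hom Ob Cb BM \<rho>M BN \<rho>N \<phi>"
  unfolding comodA_hom_def by blast
lemma cAh_act: "comodA_hom Ob Cb BA BM \<rho>M actM BN \<rho>N actN \<phi> \<Longrightarrow> X \<in> Ob \<Longrightarrow> t \<in> FS (BM X \<times> BA) \<Longrightarrow>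
   \<phi> X (actM X t) = actN X (tmap (\<phi> X) (\<lambda>x. x) t)"
  unfolding comodA_hom_def id_def by blast
lemma cAh_act_tens: "comodA_hom Ob Cb BA BM \<rho>M actM BN \<rho>N actN \<phi> \<Longrightarrow> X \<in> Ob \<Longrightarrow> u \<in> FS (BM X) \<Longrightarrow> a \<in> FS BA \<Longrightarrow>
   \<phi> X (actM X (tens u a)) = actN X (tens (\<phi> X u) a)"
proof -
  assume h: "comodA_hom Ob Cb BA BM \<rho>M actM BN \<rho>N actN \<phi>" and X: "X \<in> Ob" and u: "u \<in> FS (BM X)" and a: "a \<in> FS BA"
  have "tmap (\<phi> X) (\<lambda>x. x) (tens u a) = tens (\<phi> X u) a"
    by (rule tmap_tens[OF lin_add[OF ch_lin[OF cAh_ch[OF h] X]] addhom_id(1) u a])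
  then show ?thesis using cAh_act[OF h X] u a by simp
qed

end

locale avg =
  fixes Ob :: "'o set" and Cb :: "'o \<Rightarrow> 'o \<Rightarrow> 'c set"
    and \<delta> :: "'o \<Rightarrow> 'o \<Rightarrow> 'o \<Rightarrow> ('c \<Rightarrow> 'k::field) \<Rightarrow> ('c \<times> 'c \<Rightarrow> 'k)"
    and \<epsilon> :: "'o \<Rightarrow> ('c \<Rightarrow> 'k) \<Rightarrow> 'k"
    and BA :: "'a set" and mu :: "('a \<times> 'a \<Rightarrow> 'k) \<Rightarrow> ('a \<Rightarrow> 'k)" and one :: "'a \<Rightarrow> 'k"
    and \<psi> :: "'o \<Rightarrow> 'o \<Rightarrow> ('c \<times> 'a \<Rightarrow> 'k) \<Rightarrow> ('a \<times> 'c \<Rightarrow> 'k)"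
    and \<gamma> :: "'o \<Rightarrow> ('a \<times> 'c \<Rightarrow> 'k) \<Rightarrow> ('a \<Rightarrow> 'k)"
    and B2 :: "'o \<Rightarrow> 'm set" and \<rho>2 :: "'o \<Rightarrow> 'o \<Rightarrow> ('m \<Rightarrow> 'k) \<Rightarrow> ('m \<times> 'c \<Rightarrow> 'k)"
    and act2 :: "'o \<Rightarrow> ('m \<times> 'a \<Rightarrow> 'k) \<Rightarrow> ('m \<Rightarrow> 'k)"
    and B3 :: "'o \<Rightarrow> 'n set" and \<rho>3 :: "'o \<Rightarrow> 'o \<Rightarrow> ('n \<Rightarrow> 'k) \<Rightarrow> ('n \<times> 'c \<Rightarrow> 'k)"
    and act3 :: "'o \<Rightarrow> ('n \<times> 'a \<Rightarrow> 'k) \<Rightarrow> ('n \<Rightarrow> 'k)"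
    and g0 :: "'o \<Rightarrow> ('m \<Rightarrow> 'k) \<Rightarrow> ('n \<Rightarrow> 'k)"
  assumes coalg: "coalg_so Ob Cb \<delta> \<epsilon>"
    and alg: "kalg BA mu one"
    and finBA: "finite BA"
    and ent: "entwining Ob Cb \<delta> \<epsilon> BA mu one \<psi>"
    and nc: "norm_cointegral Ob Cb \<delta> \<epsilon> BA mu one \<psi> \<gamma>"
    and M2: "comodA Ob Cb \<delta> \<epsilon> BA mu one \<psi> B2 \<rho>2 act2"
    and M3: "comodA Ob Cb \<delta> \<epsilon> BA mu one \<psi> B3 \<rho>3 act3"
    and g0h: "comod_hom Ob Cb B2 \<rho>2 B3 \<rho>3 g0"
begin

lemma \<delta>_lin: "X \<in> Ob \<Longrightarrow> Y \<in> Ob \<Longrightarrow> Z \<in> Ob \<Longrightarrow> linear_on (Cb X Z) (Cb Y Z \<times> Cb X Y) (\<delta> X Y Z)"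
  using coalg unfolding coalg_so_def by blast
lemma \<epsilon>_lin: "X \<in> Ob \<Longrightarrow> lfun_on (Cb X X) (\<epsilon> X)"
  using coalg unfolding coalg_so_def by blast
lemma mu_lin: "linear_on (BA \<times> BA) BA mu"
  using alg unfolding kalg_def by blast
lemma one_FS: "one \<in> FS BA"
  using alg unfolding kalg_def by blast
lemma \<psi>_lin: "X \<in> Ob \<Longrightarrow> Y \<in> Ob \<Longrightarrow> linear_on (Cb X Y \<times> BA) (BA \<times> Cb X Y) (\<psi> X Y)"
  using ent unfolding entwining_def by blast
lemma \<gamma>_lin: "X \<in> Ob \<Longrightarrow> linear_on (BA \<times> Cb X X) BA (\<gamma> X)"
  using nc unfolding norm_cointegral_def by blast
lemma nc1: "X \<in> Ob \<Longrightarrow> Y \<in> Ob \<Longrightarrow> f \<in> FS (Cb X Y) \<Longrightarrow>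
   tmap (\<lambda>x. x) (\<psi> X Y) (assocr (tmap (\<psi> X Y) (\<gamma> X) (ins_mid (coev BA) (\<delta> X X Y f)))) =
   tmap (\<lambda>x. x) (tmap (\<gamma> Y) (\<lambda>x. x)) (tmap (\<lambda>x. x) assocl (assocr (tens (coev BA) (\<delta> X Y Y f))))"
  using nc unfolding norm_cointegral_def id_def by blast
lemma nc2: "X \<in> Ob \<Longrightarrow> t \<in> FS (Cb X X \<times> BA) \<Longrightarrow>
   tmap (\<lambda>x. x) mu (tmap (\<lambda>x. x) (tmap (\<gamma> X) (\<lambda>x. x)) (tmap (\<lambda>x. x) assocl (assocr (tens (coev BA) t)))) =
   tmap mu (\<gamma> X) (ins_mid (coev BA) (\<psi> X X t))"
  using nc unfolding norm_cointegral_def id_def by blast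
lemma nc3: "X \<in> Ob \<Longrightarrow> f \<in> FS (Cb X X) \<Longrightarrow>
   mu (tmap (\<lambda>x. x) (\<gamma> X) (assocr (tens (coev BA) f))) = vsmul (\<epsilon> X f) one"
  using nc unfolding norm_cointegral_def id_def by blast

lemmas \<rho>2_lin = cA_rho_lin[OF M2] and act2_lin = cA_act_lin[OF M2] and compat2 = cA_compat[OF M2]
  and coassoc2 = cA_coassoc[OF M2] and counit2 = cA_counit[OF M2] and assoc2 = act_assoc_tens[OF M2 _ _ _ _ mu_lin]
lemmas \<rho>3_lin = cA_rho_lin[OF M3] and act3_lin = cA_act_lin[OF M3] and compat3 = cA_compat[OF M3]
  and unit3 = cA_unit[OF M3] and assoc3 = act_assoc_tens[OF M3 _ _ _ _ mu_lin]
lemmas g0_lin = ch_lin[OF g0h] and g0_comm = ch_comm[OF g0h]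

lemma coevFS: "(coev BA :: _ \<Rightarrow> 'k) \<in> FS (BA \<times> BA)" using coev_FS[OF finBA] .

definition "\<Gamma> X = (\<lambda>c. tmap (\<lambda>x. x) (\<gamma> X) (assocr (tens (coev BA) c)))"
definition "h X = (\<lambda>t. g0 X (act2 X t))"
definition "\<Lambda> X u = (\<lambda>w. act3 X (tmap (\<lambda>x. h X (tens u x)) (\<lambda>x. x) w))"
definition "E X = (\<lambda>s. act3 X (tmap (h X) (\<lambda>x. x) (assocl (tmap (\<lambda>x. x) (\<Gamma> X) s))))"
definition "gmap X = (\<lambda>m. E X (\<rho>2 X X m))"

lemma \<Gamma>_lin: "X \<in> Ob \<Longrightarrow> linear_on (Cb X X) (BA \<times> BA) (\<Gamma> X)"
  unfolding \<Gamma>_def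
  by (intro lin_comp[OF lin_tmap[OF lin_id(1) \<gamma>_lin] lin_comp[OF lin_assocr lin_tens_r[OF coevFS]]])
lemma h_lin: "X \<in> Ob \<Longrightarrow> linear_on (B2 X \<times> BA) (B3 X) (h X)"
  unfolding h_def by (intro lin_comp[OF g0_lin act2_lin])
lemma \<Lambda>_lin: "X \<in> Ob \<Longrightarrow> u \<in> FS (B2 X) \<Longrightarrow> linear_on (BA \<times> BA) (B3 X) (\<Lambda> X u)"
  unfolding \<Lambda>_def by (intro lin_comp[OF act3_lin lin_tmap[OF lin_comp[OF h_lin lin_tens_r] lin_id(1)]])
lemma E_lin: "X \<in> Ob \<Longrightarrow> linear_on (B2 X \<times> Cb X X) (B3 X) (E X)"
  unfolding E_def
  by (intro lin_comp[OF act3_lin lin_comp[OF lin_tmap[OF h_lin lin_id(1)] lin_comp[OF lin_assocl lin_tmap[OF lin_id(1) \<Gamma>_lin]]]])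
lemma gmap_lin: "X \<in> Ob \<Longrightarrow> linear_on (B2 X) (B3 X) (gmap X)"
  unfolding gmap_def by (intro lin_comp[OF E_lin \<rho>2_lin])


lemma vsum_cong: "(\<And>i. i \<in> S \<Longrightarrow> F i = G i) \<Longrightarrow> vsum S F = vsum S G"
  unfolding vsum_def by (auto intro!: sum.cong)

lemma \<Gamma>_eq:
  assumes X: "X \<in> Ob" and c: "c \<in> FS (Cb X X)"
  shows "\<Gamma> X c = vsum BA (\<lambda>b. tens (bvec b) (\<gamma> X (tens (bvec b) c)))"
proof -
  have "tens (coev BA) c = vsum BA (\<lambda>b. tens (tens (bvec b) (bvec b)) c)"
    by (simp add: coev_vsum[OF finBA] tens_vsum_l)
  then have "assocr (tens (coev BA) c) = vsum BA (\<lambda>b. assocr (tens (tens (bvec b) (bvec b)) c))"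
    by (simp add: gaddhom_vsum[OF gaddhom_assocr finBA])
  also have "\<dots> = vsum BA (\<lambda>b. tens (bvec b) (tens (bvec b) c))" by simp
  finally have e: "assocr (tens (coev BA) c) = vsum BA (\<lambda>b. tens (bvec b) (tens (bvec b) c))" .
  have "\<Gamma> X c = vsum BA (\<lambda>b. tmap (\<lambda>x. x) (\<gamma> X) (tens (bvec b) (tens (bvec b) c)))"
    unfolding \<Gamma>_def e
    by (rule addhom_vsum[OF addhom_tmap finBA, where B="BA \<times> (BA \<times> Cb X X)"]) (use c in auto)
  also have "\<dots> = vsum BA (\<lambda>b. tens (bvec b) (\<gamma> X (tens (bvec b) c)))"
    by (rule vsum_cong, rule tmap_tens[OF addhom_id(1) lin_add[OF \<gamma>_lin[OF X]]]) (use c in auto)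
  finally show ?thesis .
qed

lemma \<Gamma>_FS: "X \<in> Ob \<Longrightarrow> c \<in> FS (Cb X X) \<Longrightarrow> \<Gamma> X c \<in> FS (BA \<times> BA)"
  by (rule lin_FS[OF \<Gamma>_lin])

lemma mu_\<Gamma>: "X \<in> Ob \<Longrightarrow> c \<in> FS (Cb X X) \<Longrightarrow> mu (\<Gamma> X c) = vsmul (\<epsilon> X c) one"
  unfolding \<Gamma>_def by (rule nc3)

lemma E_tens:
  assumes X: "X \<in> Ob" and u: "u \<in> FS (B2 X)" and c: "c \<in> FS (Cb X X)"
  shows "E X (tens u c) = \<Lambda> X u (\<Gamma> X c)"
proof -
  have w: "\<Gamma> X c \<in> FS (BA \<times> BA)" using \<Gamma>_FS[OF X c] .
  have e1: "tmap (\<lambda>x. x) (\<Gamma> X) (tens u c) = tens u (\<Gamma> X c)"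
    by (rule tmap_tens[OF addhom_id(1) lin_add[OF \<Gamma>_lin[OF X]] u c])
  have e2: "assocl (tens u (\<Gamma> X c)) = tmap (tens u) (\<lambda>x. x) (\<Gamma> X c)"
    by (rule assocl_tens_gen[OF w])
  have e3: "tmap (h X) (\<lambda>x. x) (tmap (tens u) (\<lambda>x. x) (\<Gamma> X c)) = tmap (\<lambda>x. h X (tens u x)) (\<lambda>x. x) (\<Gamma> X c)"
    by (rule tmap_comp[OF lin_maps[OF lin_tens_r[OF u]] lin_maps[OF lin_id(1)] lin_add[OF h_lin[OF X]] addhom_id(1) w])
  show ?thesis unfolding E_def \<Lambda>_def by (simp only: e1 e2 e3)
qed

lemma \<Lambda>_tens:
  assumes X: "X \<in> Ob" and u: "u \<in> FS (B2 X)" and x: "x \<in> FS BA" and y: "y \<in> FS BA"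
  shows "\<Lambda> X u (tens x y) = act3 X (tens (h X (tens u x)) y)"
  unfolding \<Lambda>_def
  by (subst tmap_tens[OF lin_add[OF lin_comp[OF h_lin[OF X] lin_tens_r[OF u]]] addhom_id(1) x y]) (rule refl)

lemma \<Lambda>_vsum:
  assumes X: "X \<in> Ob" and u: "u \<in> FS (B2 X)" and F: "\<And>b. b \<in> BA \<Longrightarrow> F b \<in> FS (BA \<times> BA)"
  shows "\<Lambda> X u (vsum BA F) = vsum BA (\<lambda>b. \<Lambda> X u (F b))"
  by (rule addhom_vsum[OF lin_add[OF \<Lambda>_lin[OF X u]] finBA F])

lemma \<Lambda>_\<Gamma>:
  assumes X: "X \<in> Ob" and u: "u \<in> FS (B2 X)" and c: "c \<in> FS (Cb X X)"
  shows "\<Lambda> X u (\<Gamma> X c) = vsum BA (\<lambda>b. act3 X (tens (h X (tens u (bvec b))) (\<gamma> X (tens (bvec b) c))))"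
proof -
  have g: "\<And>b. b \<in> BA \<Longrightarrow> \<gamma> X (tens (bvec b) c) \<in> FS BA"
    using lin_FS[OF \<gamma>_lin[OF X]] c by auto
  show ?thesis unfolding \<Gamma>_eq[OF X c]
    by (subst \<Lambda>_vsum[OF X u]) (auto simp: g intro!: vsum_cong \<Lambda>_tens[OF X u])
qed


lemma econtr_lin: "X \<in> Ob \<Longrightarrow> linear_on (BM \<times> Cb X X) BM (econtr_r (\<epsilon> X))"
  unfolding econtr_r_lext by (rule lin_lext) auto

lemma g_extends:
  fixes B1 :: "'o \<Rightarrow> 'm1 set" and \<rho>1 act1 i f
  assumes M1: "comodA Ob Cb \<delta> \<epsilon> BA mu one \<psi> B1 \<rho>1 act1"
    and ih: "comodA_hom Ob Cb BA B1 \<rho>1 act1 B2 \<rho>2 act2 i"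
    and fh: "comodA_hom Ob Cb BA B1 \<rho>1 act1 B3 \<rho>3 act3 f"
    and gi: "\<And>X n. X \<in> Ob \<Longrightarrow> n \<in> FS (B1 X) \<Longrightarrow> g0 X (i X n) = f X n"
    and X: "X \<in> Ob" and n: "n \<in> FS (B1 X)"
  shows "gmap X (i X n) = f X n"
proof -
  have i_lin: "linear_on (B1 X) (B2 X) (i X)" by (rule ch_lin[OF cAh_ch[OF ih] X])
  have f_lin: "linear_on (B1 X) (B3 X) (f X)" by (rule ch_lin[OF cAh_ch[OF fh] X])
  have key: "E X (tmap (i X) (\<lambda>x. x) s) = f X (econtr_r (\<epsilon> X) s)" if s: "s \<in> FS (B1 X \<times> Cb X X)" for s
  proof (rule ext_basis[where B="B1 X \<times> Cb X X" and \<Phi>="\<lambda>s. E X (tmap (i X) (\<lambda>x. x) s)"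
        and \<Psi>="\<lambda>s. f X (econtr_r (\<epsilon> X) s)", OF _ _ _ s])
    show "addhom (B1 X \<times> Cb X X) (\<lambda>s. E X (tmap (i X) (\<lambda>x. x) s))"
      by (rule lin_add[OF lin_comp[OF E_lin[OF X] lin_tmap[OF i_lin lin_id(1)]]])
    show "addhom (B1 X \<times> Cb X X) (\<lambda>s. f X (econtr_r (\<epsilon> X) s))"
      by (rule lin_add[OF lin_comp[OF f_lin econtr_lin[OF X]]])
    fix p assume "p \<in> B1 X \<times> Cb X X"
    then obtain n' c where pe: "p = (n', c)" and n': "n' \<in> B1 X" and c: "c \<in> Cb X X" by auto
    have en: "(bvec n' :: _ \<Rightarrow> 'k) \<in> FS (B1 X)" and ec: "(bvec c :: _ \<Rightarrow> 'k) \<in> FS (Cb X X)" using n' c by auto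
    have ien: "i X (bvec n') \<in> FS (B2 X)" by (rule lin_FS[OF i_lin en])
    define N where "N = f X (bvec n')"
    have N: "N \<in> FS (B3 X)" unfolding N_def by (rule lin_FS[OF f_lin en])
    define gb where "gb b = \<gamma> X (tens (bvec b) (bvec c))" for b
    have gb: "gb b \<in> FS BA" if "b \<in> BA" for b
      unfolding gb_def using that ec by (intro lin_FS[OF \<gamma>_lin[OF X]]) auto
    have hb: "h X (tens (i X (bvec n')) (bvec b)) = act3 X (tens N (bvec b))" if "b \<in> BA" for b
    proof -
      have "h X (tens (i X (bvec n')) (bvec b)) = g0 X (i X (act1 X (tens (bvec n') (bvec b))))"
        unfolding h_def using cAh_act_tens[OF ih X en, of "bvec b"] that by simp
      also have "\<dots> = f X (act1 X (tens (bvec n') (bvec b)))"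
        by (rule gi[OF X lin_FS[OF cA_act_lin[OF M1 X]]]) (use en that in auto)
      also have "\<dots> = act3 X (tens N (bvec b))"
        unfolding N_def using cAh_act_tens[OF fh X en, of "bvec b"] that by simp
      finally show ?thesis .
    qed
    have "E X (tmap (i X) (\<lambda>x. x) (bvec p)) = E X (tens (i X (bvec n')) (bvec c))"
      by (simp add: pe tmap_bvec)
    also have "\<dots> = \<Lambda> X (i X (bvec n')) (\<Gamma> X (bvec c))" by (rule E_tens[OF X ien ec])
    also have "\<dots> = vsum BA (\<lambda>b. act3 X (tens (act3 X (tens N (bvec b))) (gb b)))"
      unfolding \<Lambda>_\<Gamma>[OF X ien ec] gb_def by (rule vsum_cong) (simp add: hb)
    also have "\<dots> = vsum BA (\<lambda>b. act3 X (tens N (mu (tens (bvec b) (gb b)))))"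
      by (rule vsum_cong, rule assoc3[OF X N]) (auto simp: gb)
    also have "\<dots> = act3 X (tens N (mu (vsum BA (\<lambda>b. tens (bvec b) (gb b)))))"
      by (rule addhom_vsum[OF lin_add[OF lin_comp[OF act3_lin[OF X] lin_comp[OF lin_tens_r[OF N] mu_lin]]] finBA, symmetric])
        (auto simp: gb)
    also have "vsum BA (\<lambda>b. tens (bvec b) (gb b)) = \<Gamma> X (bvec c)"
      unfolding \<Gamma>_eq[OF X ec] gb_def ..
    also have "mu (\<Gamma> X (bvec c)) = vsmul (\<epsilon> X (bvec c)) one" by (rule mu_\<Gamma>[OF X ec])
    also have "tens N (vsmul (\<epsilon> X (bvec c)) one) = vsmul (\<epsilon> X (bvec c)) (tens N one)"
      using gaddhom_tens_r unfolding gaddhom_def by blast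
    also have "act3 X (vsmul (\<epsilon> X (bvec c)) (tens N one)) = vsmul (\<epsilon> X (bvec c)) (act3 X (tens N one))"
      by (rule addhom_vsmul[OF lin_add[OF act3_lin[OF X]]]) (use N one_FS in auto)
    also have "act3 X (tens N one) = N" by (rule unit3[OF X N])
    also have "vsmul (\<epsilon> X (bvec c)) N = f X (vsmul (\<epsilon> X (bvec c)) (bvec n'))"
      unfolding N_def by (rule addhom_vsmul[OF lin_add[OF f_lin] en, symmetric])
    also have "\<dots> = f X (econtr_r (\<epsilon> X) (bvec p))"
      by (simp add: pe econtr_r_lext)
    finally show "E X (tmap (i X) (\<lambda>x. x) (bvec p)) = f X (econtr_r (\<epsilon> X) (bvec p))" .
  qed
  have "gmap X (i X n) = E X (tmap (i X) (\<lambda>x. x) (\<rho>1 X X n))"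
    unfolding gmap_def using ch_comm[OF cAh_ch[OF ih] X X n] by simp
  also have "\<dots> = f X (econtr_r (\<epsilon> X) (\<rho>1 X X n))"
    by (rule key, rule lin_FS[OF cA_rho_lin[OF M1 X X] n])
  also have "\<dots> = f X n" by (simp add: cA_counit[OF M1 X n])
  finally show ?thesis .
qed


lemma tmap_vsum_tens:
  assumes "addhom B \<phi>" "addhom Ev \<chi>" "\<And>b. b \<in> BA \<Longrightarrow> F b \<in> FS B" "\<And>b. b \<in> BA \<Longrightarrow> G b \<in> FS Ev"
  shows "tmap \<phi> \<chi> (vsum BA (\<lambda>b. tens (F b) (G b))) = vsum BA (\<lambda>b. tens (\<phi> (F b)) (\<chi> (G b)))"
  apply (subst addhom_vsum[OF addhom_tmap finBA, where B="B \<times> Ev"])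
   apply (simp add: assms)
  apply (rule vsum_cong)
  by (rule tmap_tens[OF assms(1,2)]) (auto simp: assms)

lemma \<Lambda>_mu:
  assumes X: "X \<in> Ob" and u: "u \<in> FS (B2 X)" and \<alpha>: "\<alpha> \<in> FS BA" and w: "w \<in> FS (BA \<times> BA)"
  shows "\<Lambda> X u (tmap (\<lambda>x. x) (\<lambda>x. mu (tens x \<alpha>)) w) = act3 X (tens (\<Lambda> X u w) \<alpha>)"
proof (rule ext_basis[where B="BA \<times> BA" and \<Phi>="\<lambda>w. \<Lambda> X u (tmap (\<lambda>x. x) (\<lambda>x. mu (tens x \<alpha>)) w)"
      and \<Psi>="\<lambda>w. act3 X (tens (\<Lambda> X u w) \<alpha>)", OF _ _ _ w])
  show "addhom (BA \<times> BA) (\<lambda>w. \<Lambda> X u (tmap (\<lambda>x. x) (\<lambda>x. mu (tens x \<alpha>)) w))"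
    by (rule lin_add[OF lin_comp[OF \<Lambda>_lin[OF X u] lin_tmap[OF lin_id(1) lin_comp[OF mu_lin lin_tens_l[OF \<alpha>]]]]])
  show "addhom (BA \<times> BA) (\<lambda>w. act3 X (tens (\<Lambda> X u w) \<alpha>))"
    by (rule lin_add[OF lin_comp[OF act3_lin[OF X] lin_comp[OF lin_tens_l[OF \<alpha>] \<Lambda>_lin[OF X u]]]])
  fix p assume "p \<in> BA \<times> BA"
  then obtain a1 a2 where pe: "p = (a1, a2)" and a1: "a1 \<in> BA" and a2: "a2 \<in> BA" by auto
  have e1: "(bvec a1 :: _ \<Rightarrow> 'k) \<in> FS BA" "(bvec a2 :: _ \<Rightarrow> 'k) \<in> FS BA" using a1 a2 by auto
  have m: "mu (tens (bvec a2) \<alpha>) \<in> FS BA" by (rule lin_FS[OF mu_lin]) (use e1 \<alpha> in auto)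
  have hn: "h X (tens u (bvec a1)) \<in> FS (B3 X)" by (rule lin_FS[OF h_lin[OF X]]) (use u e1 in auto)
  have "\<Lambda> X u (tmap (\<lambda>x. x) (\<lambda>x. mu (tens x \<alpha>)) (bvec p)) = \<Lambda> X u (tens (bvec a1) (mu (tens (bvec a2) \<alpha>)))"
    by (simp add: pe tmap_bvec)
  also have "\<dots> = act3 X (tens (h X (tens u (bvec a1))) (mu (tens (bvec a2) \<alpha>)))"
    by (rule \<Lambda>_tens[OF X u e1(1) m])
  also have "\<dots> = act3 X (tens (act3 X (tens (h X (tens u (bvec a1))) (bvec a2))) \<alpha>)"
    by (rule assoc3[OF X hn e1(2) \<alpha>, symmetric])
  also have "\<dots> = act3 X (tens (\<Lambda> X u (bvec p)) \<alpha>)"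
    by (simp add: pe bvec_pair \<Lambda>_tens[OF X u e1])
  finally show "\<Lambda> X u (tmap (\<lambda>x. x) (\<lambda>x. mu (tens x \<alpha>)) (bvec p)) = act3 X (tens (\<Lambda> X u (bvec p)) \<alpha>)" .
qed

lemma A3:
  assumes X: "X \<in> Ob" and c: "c \<in> FS (Cb X X)" and \<alpha>: "\<alpha> \<in> FS BA"
  shows "tmap (\<lambda>x. x) mu (tmap (\<lambda>x. x) (tmap (\<gamma> X) (\<lambda>x. x)) (tmap (\<lambda>x. x) assocl (assocr (tens (coev BA) (tens c \<alpha>)))))
       = tmap (\<lambda>x. x) (\<lambda>x. mu (tens x \<alpha>)) (\<Gamma> X c)"
proof -
  have eb: "\<And>b. b \<in> BA \<Longrightarrow> (bvec b :: _ \<Rightarrow> 'k) \<in> FS BA" by auto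
  have gb: "\<And>b. b \<in> BA \<Longrightarrow> \<gamma> X (tens (bvec b) c) \<in> FS BA"
    using c by (intro lin_FS[OF \<gamma>_lin[OF X]]) auto
  have "tens (coev BA) (tens c \<alpha>) = vsum BA (\<lambda>b. tens (tens (bvec b) (bvec b)) (tens c \<alpha>))"
    by (simp add: coev_vsum[OF finBA] tens_vsum_l)
  then have "assocr (tens (coev BA) (tens c \<alpha>)) = vsum BA (\<lambda>b. assocr (tens (tens (bvec b) (bvec b)) (tens c \<alpha>)))"
    by (simp add: gaddhom_vsum[OF gaddhom_assocr finBA])
  also have "\<dots> = vsum BA (\<lambda>b. tens (bvec b) (tens (bvec b) (tens c \<alpha>)))" by simp
  finally have e1: "assocr (tens (coev BA) (tens c \<alpha>)) = vsum BA (\<lambda>b. tens (bvec b) (tens (bvec b) (tens c \<alpha>)))" .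
  have e2: "tmap (\<lambda>x. x) assocl (vsum BA (\<lambda>b. tens (bvec b) (tens (bvec b) (tens c \<alpha>)))) =
       vsum BA (\<lambda>b. tens (bvec b) (tens (tens (bvec b) c) \<alpha>))"
    by (subst tmap_vsum_tens[OF addhom_id(1) gaddhom_addhom[OF gaddhom_assocl], where Ev="BA \<times> (Cb X X \<times> BA)"])
       (use c \<alpha> in auto)
  have e3: "tmap (\<lambda>x. x) (tmap (\<gamma> X) (\<lambda>x. x)) (vsum BA (\<lambda>b. tens (bvec b) (tens (tens (bvec b) c) \<alpha>))) =
       vsum BA (\<lambda>b. tens (bvec b) (tens (\<gamma> X (tens (bvec b) c)) \<alpha>))"
    apply (subst tmap_vsum_tens[OF addhom_id(1) addhom_tmap, where Ev="(BA \<times> Cb X X) \<times> BA"])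
      apply (use c \<alpha> in auto)[2]
    apply (rule vsum_cong)
    apply (subst tmap_tens[OF lin_add[OF \<gamma>_lin[OF X]] addhom_id(1)])
    using c \<alpha> by auto
  have e4: "tmap (\<lambda>x. x) mu (vsum BA (\<lambda>b. tens (bvec b) (tens (\<gamma> X (tens (bvec b) c)) \<alpha>))) =
       vsum BA (\<lambda>b. tens (bvec b) (mu (tens (\<gamma> X (tens (bvec b) c)) \<alpha>)))"
    by (subst tmap_vsum_tens[OF addhom_id(1) lin_add[OF mu_lin]]) (use gb \<alpha> in auto)
  have e5: "tmap (\<lambda>x. x) (\<lambda>x. mu (tens x \<alpha>)) (\<Gamma> X c) = vsum BA (\<lambda>b. tens (bvec b) (mu (tens (\<gamma> X (tens (bvec b) c)) \<alpha>)))"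
    unfolding \<Gamma>_eq[OF X c]
    by (subst tmap_vsum_tens[OF addhom_id(1) lin_add[OF lin_comp[OF mu_lin lin_tens_l[OF \<alpha>]]]]) (use gb in auto)
  show ?thesis unfolding e1 e2 e3 e4 e5 ..
qed

lemma A2:
  assumes X: "X \<in> Ob" and u: "u \<in> FS (B2 X)" and w: "w \<in> FS (BA \<times> Cb X X)"
  shows "E X (tmap (\<lambda>x. act2 X (tens u x)) (\<lambda>x. x) w) = \<Lambda> X u (tmap mu (\<gamma> X) (ins_mid (coev BA) w))"
proof (rule ext_basis[where B="BA \<times> Cb X X" and \<Phi>="\<lambda>w. E X (tmap (\<lambda>x. act2 X (tens u x)) (\<lambda>x. x) w)"
      and \<Psi>="\<lambda>w. \<Lambda> X u (tmap mu (\<gamma> X) (ins_mid (coev BA) w))", OF _ _ _ w])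
  show "addhom (BA \<times> Cb X X) (\<lambda>w. E X (tmap (\<lambda>x. act2 X (tens u x)) (\<lambda>x. x) w))"
    by (rule lin_add[OF lin_comp[OF E_lin[OF X] lin_tmap[OF lin_comp[OF act2_lin[OF X] lin_tens_r[OF u]] lin_id(1)]]])
  show "addhom (BA \<times> Cb X X) (\<lambda>w. \<Lambda> X u (tmap mu (\<gamma> X) (ins_mid (coev BA) w)))"
    by (rule lin_add[OF lin_comp[OF \<Lambda>_lin[OF X u] lin_comp[OF lin_tmap[OF mu_lin \<gamma>_lin[OF X]] lin_ins_mid[OF coevFS]]]])
  fix p assume "p \<in> BA \<times> Cb X X"
  then obtain a c where pe: "p = (a, c)" and a: "a \<in> BA" and c: "c \<in> Cb X X" by auto
  have ea: "(bvec a :: _ \<Rightarrow> 'k) \<in> FS BA" and ec: "(bvec c :: _ \<Rightarrow> 'k) \<in> FS (Cb X X)" using a c by auto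
  have eb: "\<And>b. b \<in> BA \<Longrightarrow> (bvec b :: _ \<Rightarrow> 'k) \<in> FS BA" by auto
  define u' where "u' = act2 X (tens u (bvec a))"
  have u': "u' \<in> FS (B2 X)" unfolding u'_def by (rule lin_FS[OF act2_lin[OF X]]) (use u ea in auto)
  have mab: "\<And>b. b \<in> BA \<Longrightarrow> mu (tens (bvec a) (bvec b)) \<in> FS BA"
    by (rule lin_FS[OF mu_lin]) (use ea in auto)
  have gb: "\<And>b. b \<in> BA \<Longrightarrow> \<gamma> X (tens (bvec b) (bvec c)) \<in> FS BA"
    using ec by (intro lin_FS[OF \<gamma>_lin[OF X]]) auto
  have "E X (tmap (\<lambda>x. act2 X (tens u x)) (\<lambda>x. x) (bvec p)) = E X (tens u' (bvec c))"
    by (simp add: pe tmap_bvec u'_def)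
  also have "\<dots> = \<Lambda> X u' (\<Gamma> X (bvec c))" by (rule E_tens[OF X u' ec])
  also have "\<dots> = vsum BA (\<lambda>b. act3 X (tens (h X (tens u' (bvec b))) (\<gamma> X (tens (bvec b) (bvec c)))))"
    by (rule \<Lambda>_\<Gamma>[OF X u' ec])
  also have "\<dots> = vsum BA (\<lambda>b. \<Lambda> X u (tens (mu (tens (bvec a) (bvec b))) (\<gamma> X (tens (bvec b) (bvec c)))))"
    apply (rule vsum_cong)
    apply (subst \<Lambda>_tens[OF X u mab gb], assumption+)
    unfolding h_def u'_def by (subst assoc2[OF X u ea eb], simp_all)
  also have "\<dots> = \<Lambda> X u (vsum BA (\<lambda>b. tens (mu (tens (bvec a) (bvec b))) (\<gamma> X (tens (bvec b) (bvec c)))))"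
    by (rule \<Lambda>_vsum[OF X u, symmetric]) (use mab gb in auto)
  also have "vsum BA (\<lambda>b. tens (mu (tens (bvec a) (bvec b))) (\<gamma> X (tens (bvec b) (bvec c)))) =
             tmap mu (\<gamma> X) (ins_mid (coev BA) (bvec p))"
    unfolding pe bvec_pair ins_mid_coev_tens[OF finBA]
    by (subst tmap_vsum_tens[OF lin_add[OF mu_lin] lin_add[OF \<gamma>_lin[OF X]]]) (use ea ec in auto)
  finally show "E X (tmap (\<lambda>x. act2 X (tens u x)) (\<lambda>x. x) (bvec p)) = \<Lambda> X u (tmap mu (\<gamma> X) (ins_mid (coev BA) (bvec p)))" .
qed


lemma gmap_Alin:
  assumes X: "X \<in> Ob" and t: "t \<in> FS (B2 X \<times> BA)"
  shows "gmap X (act2 X t) = act3 X (tmap (gmap X) (\<lambda>x. x) t)"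
proof (rule ext_basis[where B="B2 X \<times> BA" and \<Phi>="\<lambda>t. gmap X (act2 X t)"
      and \<Psi>="\<lambda>t. act3 X (tmap (gmap X) (\<lambda>x. x) t)", OF _ _ _ t])
  show "addhom (B2 X \<times> BA) (\<lambda>t. gmap X (act2 X t))"
    by (rule lin_add[OF lin_comp[OF gmap_lin[OF X] act2_lin[OF X]]])
  show "addhom (B2 X \<times> BA) (\<lambda>t. act3 X (tmap (gmap X) (\<lambda>x. x) t))"
    by (rule lin_add[OF lin_comp[OF act3_lin[OF X] lin_tmap[OF gmap_lin[OF X] lin_id(1)]]])
  fix p assume "p \<in> B2 X \<times> BA"
  then obtain m a where pe: "p = (m, a)" and m: "m \<in> B2 X" and a: "a \<in> BA" by auto
  define \<alpha> where "\<alpha> = (bvec a :: _ \<Rightarrow> 'k)"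
  have \<alpha>: "\<alpha> \<in> FS BA" unfolding \<alpha>_def using a by auto
  have em: "(bvec m :: _ \<Rightarrow> 'k) \<in> FS (B2 X)" using m by auto
  have A1: "E X (tmap (act2 X) (\<lambda>x. x) (assocl (tmap (\<lambda>x. x) (\<psi> X X) (assocr (tens s \<alpha>)))))
           = act3 X (tens (E X s) \<alpha>)" if s: "s \<in> FS (B2 X \<times> Cb X X)" for s
  proof (rule ext_basis[where B="B2 X \<times> Cb X X"
        and \<Phi>="\<lambda>s. E X (tmap (act2 X) (\<lambda>x. x) (assocl (tmap (\<lambda>x. x) (\<psi> X X) (assocr (tens s \<alpha>)))))"
        and \<Psi>="\<lambda>s. act3 X (tens (E X s) \<alpha>)", OF _ _ _ s])
    show "addhom (B2 X \<times> Cb X X) (\<lambda>s. E X (tmap (act2 X) (\<lambda>x. x) (assocl (tmap (\<lambda>x. x) (\<psi> X X) (assocr (tens s \<alpha>))))))"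
      by (rule lin_add[OF lin_comp[OF E_lin[OF X] lin_comp[OF lin_tmap[OF act2_lin[OF X] lin_id(1)]
            lin_comp[OF lin_assocl lin_comp[OF lin_tmap[OF lin_id(1) \<psi>_lin[OF X X]] lin_comp[OF lin_assocr lin_tens_l[OF \<alpha>]]]]]]])
    show "addhom (B2 X \<times> Cb X X) (\<lambda>s. act3 X (tens (E X s) \<alpha>))"
      by (rule lin_add[OF lin_comp[OF act3_lin[OF X] lin_comp[OF lin_tens_l[OF \<alpha>] E_lin[OF X]]]])
    fix q assume "q \<in> B2 X \<times> Cb X X"
    then obtain m' c where qe: "q = (m', c)" and m': "m' \<in> B2 X" and c: "c \<in> Cb X X" by auto
    have em': "(bvec m' :: _ \<Rightarrow> 'k) \<in> FS (B2 X)" and ec: "(bvec c :: _ \<Rightarrow> 'k) \<in> FS (Cb X X)" using m' c by auto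
    define w where "w = \<psi> X X (tens (bvec c) \<alpha>)"
    have w: "w \<in> FS (BA \<times> Cb X X)" unfolding w_def by (rule lin_FS[OF \<psi>_lin[OF X X]]) (use ec \<alpha> in auto)
    have e1: "tmap (\<lambda>x. x) (\<psi> X X) (assocr (tens (bvec q) \<alpha>)) = tens (bvec m') w"
      unfolding qe bvec_pair assocr_tens w_def
      by (rule tmap_tens[OF addhom_id(1) lin_add[OF \<psi>_lin[OF X X]] em']) (use ec \<alpha> in auto)
    have e2: "tmap (act2 X) (\<lambda>x. x) (assocl (tens (bvec m') w)) = tmap (\<lambda>x. act2 X (tens (bvec m') x)) (\<lambda>x. x) w"
      unfolding assocl_tens_gen[OF w]
      by (rule tmap_comp[OF lin_maps[OF lin_tens_r[OF em']] lin_maps[OF lin_id(1)] lin_add[OF act2_lin[OF X]] addhom_id(1) w])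
    have "E X (tmap (act2 X) (\<lambda>x. x) (assocl (tmap (\<lambda>x. x) (\<psi> X X) (assocr (tens (bvec q) \<alpha>)))))
        = E X (tmap (\<lambda>x. act2 X (tens (bvec m') x)) (\<lambda>x. x) w)" unfolding e1 e2 ..
    also have "\<dots> = \<Lambda> X (bvec m') (tmap mu (\<gamma> X) (ins_mid (coev BA) w))" by (rule A2[OF X em' w])
    also have "tmap mu (\<gamma> X) (ins_mid (coev BA) w) = tmap (\<lambda>x. x) (\<lambda>x. mu (tens x \<alpha>)) (\<Gamma> X (bvec c))"
      unfolding w_def nc2[OF X tens_FS[OF ec \<alpha>], symmetric] by (rule A3[OF X ec \<alpha>])
    also have "\<Lambda> X (bvec m') \<dots> = act3 X (tens (\<Lambda> X (bvec m') (\<Gamma> X (bvec c))) \<alpha>)"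
      by (rule \<Lambda>_mu[OF X em' \<alpha> \<Gamma>_FS[OF X ec]])
    also have "\<Lambda> X (bvec m') (\<Gamma> X (bvec c)) = E X (bvec q)"
      unfolding qe bvec_pair by (rule E_tens[OF X em' ec, symmetric])
    finally show "E X (tmap (act2 X) (\<lambda>x. x) (assocl (tmap (\<lambda>x. x) (\<psi> X X) (assocr (tens (bvec q) \<alpha>)))))
           = act3 X (tens (E X (bvec q)) \<alpha>)" .
  qed
  have r: "\<rho>2 X X (bvec m) \<in> FS (B2 X \<times> Cb X X)" by (rule lin_FS[OF \<rho>2_lin[OF X X] em])
  have "gmap X (act2 X (bvec p)) = E X (\<rho>2 X X (act2 X (tens (bvec m) \<alpha>)))"
    unfolding gmap_def pe bvec_pair \<alpha>_def ..
  also have "\<dots> = E X (tmap (act2 X) (\<lambda>x. x) (assocl (tmap (\<lambda>x. x) (\<psi> X X) (assocr (tens (\<rho>2 X X (bvec m)) \<alpha>)))))"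
    apply (subst compat2[OF X X tens_FS[OF em \<alpha>]])
    apply (subst tmap_tens[OF lin_add[OF \<rho>2_lin[OF X X]] addhom_id(1) em \<alpha>])
    ..
  also have "\<dots> = act3 X (tens (E X (\<rho>2 X X (bvec m))) \<alpha>)" by (rule A1[OF r])
  also have "\<dots> = act3 X (tmap (gmap X) (\<lambda>x. x) (bvec p))"
    by (simp add: pe tmap_bvec gmap_def \<alpha>_def)
  finally show "gmap X (act2 X (bvec p)) = act3 X (tmap (gmap X) (\<lambda>x. x) (bvec p))" .
qed


definition "L X Y = (\<lambda>w. tmap (\<lambda>x. x) (\<psi> X Y) (assocr (tmap (\<psi> X Y) (\<gamma> X) (ins_mid (coev BA) w))))"
definition "\<Theta> Y v = (\<lambda>z. tmap (\<Lambda> Y v) (\<lambda>x. x) (assocl z))"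
definition "Lp X Y d = (\<lambda>w. tmap (\<lambda>x. x) (\<psi> X Y) (assocr (tmap (\<lambda>x. \<psi> X Y (tens d x)) (\<lambda>x. x) w)))"
definition "\<Omega> X Y = lext (\<lambda>q. \<Theta> Y (bvec (fst q)) (L X Y (bvec (snd q))))"
definition "\<Omega>w X Y w = lext (\<lambda>q. \<Theta> Y (bvec (fst q)) (Lp X Y (bvec (snd q)) w))"

lemma L_lin: "X \<in> Ob \<Longrightarrow> Y \<in> Ob \<Longrightarrow> linear_on (Cb X Y \<times> Cb X X) (BA \<times> (BA \<times> Cb X Y)) (L X Y)"
  unfolding L_def
  by (rule lin_comp[OF lin_tmap[OF lin_id(1) \<psi>_lin] lin_comp[OF lin_assocr lin_comp[OF lin_tmap[OF \<psi>_lin \<gamma>_lin] lin_ins_mid[OF coevFS]]]])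
lemma \<Theta>_lin: "Y \<in> Ob \<Longrightarrow> v \<in> FS (B2 Y) \<Longrightarrow> linear_on (BA \<times> (BA \<times> D)) (B3 Y \<times> D) (\<Theta> Y v)"
  unfolding \<Theta>_def by (rule lin_comp[OF lin_tmap[OF \<Lambda>_lin lin_id(1)] lin_assocl])
lemma Lp_lin: "X \<in> Ob \<Longrightarrow> Y \<in> Ob \<Longrightarrow> d \<in> FS (Cb X Y) \<Longrightarrow> linear_on (BA \<times> BA) (BA \<times> (BA \<times> Cb X Y)) (Lp X Y d)"
  unfolding Lp_def
  by (rule lin_comp[OF lin_tmap[OF lin_id(1) \<psi>_lin] lin_comp[OF lin_assocr lin_tmap[OF lin_comp[OF \<psi>_lin lin_tens_r] lin_id(1)]]])
lemma \<Omega>_lin: "X \<in> Ob \<Longrightarrow> Y \<in> Ob \<Longrightarrow> linear_on (B2 Y \<times> (Cb X Y \<times> Cb X X)) (B3 Y \<times> Cb X Y) (\<Omega> X Y)"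
  unfolding \<Omega>_def by (rule lin_lext) (auto intro!: lin_FS[OF \<Theta>_lin] lin_FS[OF L_lin])
lemma \<Omega>w_lin: "X \<in> Ob \<Longrightarrow> Y \<in> Ob \<Longrightarrow> w \<in> FS (BA \<times> BA) \<Longrightarrow> linear_on (B2 Y \<times> Cb X Y) (B3 Y \<times> Cb X Y) (\<Omega>w X Y w)"
  unfolding \<Omega>w_def by (rule lin_lext) (auto intro!: lin_FS[OF \<Theta>_lin] lin_FS[OF Lp_lin])

lemma C1b:
  assumes X: "X \<in> Ob" and Y: "Y \<in> Ob" and d: "d \<in> Cb X Y" and c: "c \<in> Cb X X"
  shows "L X Y (bvec (d, c)) = Lp X Y (bvec d) (\<Gamma> X (bvec c))"
proof -
  have ed: "(bvec d :: _ \<Rightarrow> 'k) \<in> FS (Cb X Y)" and ec: "(bvec c :: _ \<Rightarrow> 'k) \<in> FS (Cb X X)" using d c by auto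
  have gb: "\<And>b. b \<in> BA \<Longrightarrow> \<gamma> X (tens (bvec b) (bvec c)) \<in> FS BA"
    using ec by (intro lin_FS[OF \<gamma>_lin[OF X]]) auto
  have "tmap (\<psi> X Y) (\<gamma> X) (ins_mid (coev BA) (bvec (d, c))) =
        vsum BA (\<lambda>b. tens (\<psi> X Y (tens (bvec d) (bvec b))) (\<gamma> X (tens (bvec b) (bvec c))))"
    unfolding bvec_pair ins_mid_coev_tens[OF finBA]
    by (subst tmap_vsum_tens[OF lin_add[OF \<psi>_lin[OF X Y]] lin_add[OF \<gamma>_lin[OF X]]]) (use ed ec in auto)
  moreover have "tmap (\<lambda>x. \<psi> X Y (tens (bvec d) x)) (\<lambda>x. x) (\<Gamma> X (bvec c)) =
        vsum BA (\<lambda>b. tens (\<psi> X Y (tens (bvec d) (bvec b))) (\<gamma> X (tens (bvec b) (bvec c))))"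
    unfolding \<Gamma>_eq[OF X ec]
    by (subst tmap_vsum_tens[OF lin_add[OF lin_comp[OF \<psi>_lin[OF X Y] lin_tens_r[OF ed]]] addhom_id(1)]) (use gb in auto)
  ultimately show ?thesis unfolding L_def Lp_def by simp
qed

lemma C1a:
  assumes X: "X \<in> Ob" and Y: "Y \<in> Ob" and c: "c \<in> Cb X X" and s: "s \<in> FS (B2 Y \<times> Cb X Y)"
  shows "\<Omega> X Y (assocr (tens s (bvec c))) = \<Omega>w X Y (\<Gamma> X (bvec c)) s"
proof -
  have ec: "(bvec c :: _ \<Rightarrow> 'k) \<in> FS (Cb X X)" using c by auto
  show ?thesis
  proof (rule ext_basis[where B="B2 Y \<times> Cb X Y" and \<Phi>="\<lambda>s. \<Omega> X Y (assocr (tens s (bvec c)))"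
      and \<Psi>="\<Omega>w X Y (\<Gamma> X (bvec c))", OF _ _ _ s])
    show "addhom (B2 Y \<times> Cb X Y) (\<lambda>s. \<Omega> X Y (assocr (tens s (bvec c))))"
      by (rule lin_add[OF lin_comp[OF \<Omega>_lin[OF X Y] lin_comp[OF lin_assocr lin_tens_l[OF ec]]]])
    show "addhom (B2 Y \<times> Cb X Y) (\<Omega>w X Y (\<Gamma> X (bvec c)))"
      by (rule lin_add[OF \<Omega>w_lin[OF X Y \<Gamma>_FS[OF X ec]]])
    fix q assume "q \<in> B2 Y \<times> Cb X Y"
    then obtain v d where qe: "q = (v, d)" and d: "d \<in> Cb X Y" by auto
    have "assocr (tens (bvec q) (bvec c)) = (bvec (v, (d, c)) :: _ \<Rightarrow> 'k)"
      unfolding qe bvec_pair by simp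
    then show "\<Omega> X Y (assocr (tens (bvec q) (bvec c))) = \<Omega>w X Y (\<Gamma> X (bvec c)) (bvec q)"
      unfolding \<Omega>_def \<Omega>w_def by (simp add: qe C1b[OF X Y d c])
  qed
qed


lemma C1e:
  assumes X: "X \<in> Ob" and Y: "Y \<in> Ob" and v: "v \<in> B2 Y" and a2: "a2 \<in> BA" and z: "z \<in> FS (BA \<times> Cb X Y)"
  shows "tmap (act3 Y) (\<lambda>x. x) (assocl (tmap (\<lambda>x. x) (\<psi> X Y) (assocr (tens (tmap (\<lambda>x. h Y (tens (bvec v) x)) (\<lambda>x. x) z) (bvec a2)))))
       = \<Theta> Y (bvec v) (tmap (\<lambda>x. x) (\<psi> X Y) (assocr (tens z (bvec a2))))"
proof -
  have ev: "(bvec v :: _ \<Rightarrow> 'k) \<in> FS (B2 Y)" and ea2: "(bvec a2 :: _ \<Rightarrow> 'k) \<in> FS BA" using v a2 by auto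
  show ?thesis
  proof (rule ext_basis[where B="BA \<times> Cb X Y"
      and \<Phi>="\<lambda>z. tmap (act3 Y) (\<lambda>x. x) (assocl (tmap (\<lambda>x. x) (\<psi> X Y) (assocr (tens (tmap (\<lambda>x. h Y (tens (bvec v) x)) (\<lambda>x. x) z) (bvec a2)))))"
      and \<Psi>="\<lambda>z. \<Theta> Y (bvec v) (tmap (\<lambda>x. x) (\<psi> X Y) (assocr (tens z (bvec a2))))", OF _ _ _ z])
    show "addhom (BA \<times> Cb X Y) (\<lambda>z. tmap (act3 Y) (\<lambda>x. x) (assocl (tmap (\<lambda>x. x) (\<psi> X Y) (assocr (tens (tmap (\<lambda>x. h Y (tens (bvec v) x)) (\<lambda>x. x) z) (bvec a2))))))"
      by (rule lin_add[OF lin_comp[OF lin_tmap[OF act3_lin[OF Y] lin_id(1)] lin_comp[OF lin_assocl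
            lin_comp[OF lin_tmap[OF lin_id(1) \<psi>_lin[OF X Y]] lin_comp[OF lin_assocr lin_comp[OF lin_tens_l[OF ea2]
            lin_tmap[OF lin_comp[OF h_lin[OF Y] lin_tens_r[OF ev]] lin_id(1)]]]]]]])
    show "addhom (BA \<times> Cb X Y) (\<lambda>z. \<Theta> Y (bvec v) (tmap (\<lambda>x. x) (\<psi> X Y) (assocr (tens z (bvec a2)))))"
      by (rule lin_add[OF lin_comp[OF \<Theta>_lin[OF Y ev] lin_comp[OF lin_tmap[OF lin_id(1) \<psi>_lin[OF X Y]] lin_comp[OF lin_assocr lin_tens_l[OF ea2]]]]])
    fix q assume "q \<in> BA \<times> Cb X Y"
    then obtain a d where qe: "q = (a, d)" and a: "a \<in> BA" and d: "d \<in> Cb X Y" by auto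
    have ea: "(bvec a :: _ \<Rightarrow> 'k) \<in> FS BA" and ed: "(bvec d :: _ \<Rightarrow> 'k) \<in> FS (Cb X Y)" using a d by auto
    define n where "n = h Y (tens (bvec v) (bvec a))"
    have n: "n \<in> FS (B3 Y)" unfolding n_def by (rule lin_FS[OF h_lin[OF Y]]) (use ev ea in auto)
    define y where "y = \<psi> X Y (tens (bvec d) (bvec a2))"
    have y: "y \<in> FS (BA \<times> Cb X Y)" unfolding y_def by (rule lin_FS[OF \<psi>_lin[OF X Y]]) (use ed ea2 in auto)
    have t1: "tmap (\<lambda>x. x) (\<psi> X Y) (tens n (tens (bvec d) (bvec a2))) = tens n y"
      unfolding y_def by (rule tmap_tens[OF addhom_id(1) lin_add[OF \<psi>_lin[OF X Y]] n]) (use ed ea2 in auto)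
    have t2: "tmap (\<lambda>x. x) (\<psi> X Y) (tens (bvec a) (tens (bvec d) (bvec a2))) = tens (bvec a) y"
      unfolding y_def by (rule tmap_tens[OF addhom_id(1) lin_add[OF \<psi>_lin[OF X Y]] ea]) (use ed ea2 in auto)
    have "tmap (act3 Y) (\<lambda>x. x) (assocl (tmap (\<lambda>x. x) (\<psi> X Y) (assocr (tens (tmap (\<lambda>x. h Y (tens (bvec v) x)) (\<lambda>x. x) (bvec q)) (bvec a2)))))
        = tmap (act3 Y) (\<lambda>x. x) (assocl (tens n y))"
      by (simp add: qe tmap_bvec n_def[symmetric] t1)
    also have "\<dots> = tmap (\<lambda>x. act3 Y (tens n x)) (\<lambda>x. x) y"
      unfolding assocl_tens_gen[OF y]
      by (rule tmap_comp[OF lin_maps[OF lin_tens_r[OF n]] lin_maps[OF lin_id(1)] lin_add[OF act3_lin[OF Y]] addhom_id(1) y])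
    also have "\<dots> = tmap (\<lambda>x. \<Lambda> Y (bvec v) (tens (bvec a) x)) (\<lambda>x. x) y"
      by (rule tmap_cong[OF y]) (simp_all add: \<Lambda>_tens[OF Y ev ea] n_def)
    also have "\<dots> = \<Theta> Y (bvec v) (tens (bvec a) y)"
      unfolding \<Theta>_def assocl_tens_gen[OF y]
      by (rule tmap_comp[OF lin_maps[OF lin_tens_r[OF ea]] lin_maps[OF lin_id(1)] lin_add[OF \<Lambda>_lin[OF Y ev]] addhom_id(1) y, symmetric])
    also have "\<dots> = \<Theta> Y (bvec v) (tmap (\<lambda>x. x) (\<psi> X Y) (assocr (tens (bvec q) (bvec a2))))"
      by (simp add: qe bvec_pair t2)
    finally show "tmap (act3 Y) (\<lambda>x. x) (assocl (tmap (\<lambda>x. x) (\<psi> X Y) (assocr (tens (tmap (\<lambda>x. h Y (tens (bvec v) x)) (\<lambda>x. x) (bvec q)) (bvec a2)))))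
       = \<Theta> Y (bvec v) (tmap (\<lambda>x. x) (\<psi> X Y) (assocr (tens (bvec q) (bvec a2))))" .
  qed
qed


lemma C1d:
  assumes X: "X \<in> Ob" and Y: "Y \<in> Ob" and a1: "a1 \<in> BA" and a2: "a2 \<in> BA" and s: "s \<in> FS (B2 Y \<times> Cb X Y)"
  shows "tmap (act3 Y) (\<lambda>x. x) (assocl (tmap (\<lambda>x. x) (\<psi> X Y) (assocr (tens
           (tmap (g0 Y) (\<lambda>x. x) (tmap (act2 Y) (\<lambda>x. x) (assocl (tmap (\<lambda>x. x) (\<psi> X Y) (assocr (tens s (bvec a1)))))))
           (bvec a2)))))
       = \<Omega>w X Y (bvec (a1, a2)) s"
proof -
  have ea1: "(bvec a1 :: _ \<Rightarrow> 'k) \<in> FS BA" and ea2: "(bvec a2 :: _ \<Rightarrow> 'k) \<in> FS BA" using a1 a2 by auto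
  have eaa: "(bvec (a1, a2) :: _ \<Rightarrow> 'k) \<in> FS (BA \<times> BA)" using a1 a2 by auto
  define Q where "Q = (\<lambda>s. tmap (g0 Y) (\<lambda>x. x) (tmap (act2 Y) (\<lambda>x. x) (assocl (tmap (\<lambda>x. x) (\<psi> X Y) (assocr (tens s (bvec a1)))))))"
  define R where "R = (\<lambda>z. tmap (act3 Y) (\<lambda>x. x) (assocl (tmap (\<lambda>x. x) (\<psi> X Y) (assocr (tens z (bvec a2))))))"
  have Q_lin: "linear_on (B2 Y \<times> Cb X Y) (B3 Y \<times> Cb X Y) Q"
    unfolding Q_def
    by (rule lin_comp[OF lin_tmap[OF g0_lin[OF Y] lin_id(1)] lin_comp[OF lin_tmap[OF act2_lin[OF Y] lin_id(1)]
          lin_comp[OF lin_assocl lin_comp[OF lin_tmap[OF lin_id(1) \<psi>_lin[OF X Y]] lin_comp[OF lin_assocr lin_tens_l[OF ea1]]]]]])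
  have R_lin: "linear_on (B3 Y \<times> Cb X Y) (B3 Y \<times> Cb X Y) R"
    unfolding R_def
    by (rule lin_comp[OF lin_tmap[OF act3_lin[OF Y] lin_id(1)] lin_comp[OF lin_assocl
          lin_comp[OF lin_tmap[OF lin_id(1) \<psi>_lin[OF X Y]] lin_comp[OF lin_assocr lin_tens_l[OF ea2]]]]])
  have "R (Q s) = \<Omega>w X Y (bvec (a1, a2)) s"
  proof (rule ext_basis[where B="B2 Y \<times> Cb X Y" and \<Phi>="\<lambda>s. R (Q s)" and \<Psi>="\<Omega>w X Y (bvec (a1, a2))", OF _ _ _ s])
    show "addhom (B2 Y \<times> Cb X Y) (\<lambda>s. R (Q s))" by (rule lin_add[OF lin_comp[OF R_lin Q_lin]])
    show "addhom (B2 Y \<times> Cb X Y) (\<Omega>w X Y (bvec (a1, a2)))" by (rule lin_add[OF \<Omega>w_lin[OF X Y eaa]])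
    fix q assume "q \<in> B2 Y \<times> Cb X Y"
    then obtain v d where qe: "q = (v, d)" and v: "v \<in> B2 Y" and d: "d \<in> Cb X Y" by auto
    have ev: "(bvec v :: _ \<Rightarrow> 'k) \<in> FS (B2 Y)" and ed: "(bvec d :: _ \<Rightarrow> 'k) \<in> FS (Cb X Y)" using v d by auto
    define z where "z = \<psi> X Y (tens (bvec d) (bvec a1))"
    have z: "z \<in> FS (BA \<times> Cb X Y)" unfolding z_def by (rule lin_FS[OF \<psi>_lin[OF X Y]]) (use ed ea1 in auto)
    have t1: "tmap (\<lambda>x. x) (\<psi> X Y) (tens (bvec v) (tens (bvec d) (bvec a1))) = tens (bvec v) z"
      unfolding z_def by (rule tmap_tens[OF addhom_id(1) lin_add[OF \<psi>_lin[OF X Y]] ev]) (use ed ea1 in auto)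
    have act_maps: "maps BA (B2 Y) (\<lambda>x. act2 Y (tens (bvec v) x))"
      by (rule lin_maps[OF lin_comp[OF act2_lin[OF Y] lin_tens_r[OF ev]]])
    have "Q (bvec q) = tmap (g0 Y) (\<lambda>x. x) (tmap (act2 Y) (\<lambda>x. x) (assocl (tens (bvec v) z)))"
      unfolding Q_def by (simp add: qe bvec_pair t1)
    also have "\<dots> = tmap (g0 Y) (\<lambda>x. x) (tmap (\<lambda>x. act2 Y (tens (bvec v) x)) (\<lambda>x. x) z)"
      unfolding assocl_tens_gen[OF z]
      by (subst tmap_comp[OF lin_maps[OF lin_tens_r[OF ev]] lin_maps[OF lin_id(1)] lin_add[OF act2_lin[OF Y]] addhom_id(1) z]) (rule refl)
    also have "\<dots> = tmap (\<lambda>x. h Y (tens (bvec v) x)) (\<lambda>x. x) z"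
      unfolding h_def
      by (rule tmap_comp[OF act_maps lin_maps[OF lin_id(1)] lin_add[OF g0_lin[OF Y]] addhom_id(1) z])
    finally have Qq: "Q (bvec q) = tmap (\<lambda>x. h Y (tens (bvec v) x)) (\<lambda>x. x) z" .
    have "R (Q (bvec q)) = \<Theta> Y (bvec v) (tmap (\<lambda>x. x) (\<psi> X Y) (assocr (tens z (bvec a2))))"
      unfolding Qq R_def by (rule C1e[OF X Y v a2 z])
    also have "\<dots> = \<Theta> Y (bvec v) (Lp X Y (bvec d) (bvec (a1, a2)))"
      unfolding Lp_def by (simp add: tmap_bvec z_def)
    also have "\<dots> = \<Omega>w X Y (bvec (a1, a2)) (bvec q)"
      unfolding \<Omega>w_def by (simp add: qe)
    finally show "R (Q (bvec q)) = \<Omega>w X Y (bvec (a1, a2)) (bvec q)" .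
  qed
  then show ?thesis unfolding R_def Q_def .
qed

lemma C1c:
  assumes X: "X \<in> Ob" and Y: "Y \<in> Ob" and u: "u \<in> FS (B2 X)" and w: "w \<in> FS (BA \<times> BA)"
  shows "\<rho>3 X Y (\<Lambda> X u w) = \<Omega>w X Y w (\<rho>2 X Y u)"
proof -
  have r: "\<rho>2 X Y u \<in> FS (B2 Y \<times> Cb X Y)" by (rule lin_FS[OF \<rho>2_lin[OF X Y] u])
  show ?thesis
  proof (rule ext_basis[where B="BA \<times> BA" and \<Phi>="\<lambda>w. \<rho>3 X Y (\<Lambda> X u w)" and \<Psi>="\<lambda>w. \<Omega>w X Y w (\<rho>2 X Y u)", OF _ _ _ w])
    show "addhom (BA \<times> BA) (\<lambda>w. \<rho>3 X Y (\<Lambda> X u w))"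
      by (rule lin_add[OF lin_comp[OF \<rho>3_lin[OF X Y] \<Lambda>_lin[OF X u]]])
    show "addhom (BA \<times> BA) (\<lambda>w. \<Omega>w X Y w (\<rho>2 X Y u))"
      unfolding \<Omega>w_def
      by (rule lext_lin_F[OF _ r, where F="\<lambda>w q. \<Theta> Y (bvec (fst q)) (Lp X Y (bvec (snd q)) w)"])
        (auto intro!: lin_add[OF lin_comp[OF \<Theta>_lin[OF Y] Lp_lin[OF X Y]]])
    fix p assume "p \<in> BA \<times> BA"
    then obtain a1 a2 where pe: "p = (a1, a2)" and a1: "a1 \<in> BA" and a2: "a2 \<in> BA" by auto
    have ea1: "(bvec a1 :: _ \<Rightarrow> 'k) \<in> FS BA" and ea2: "(bvec a2 :: _ \<Rightarrow> 'k) \<in> FS BA" using a1 a2 by auto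
    define n where "n = h X (tens u (bvec a1))"
    have n: "n \<in> FS (B3 X)" unfolding n_def by (rule lin_FS[OF h_lin[OF X]]) (use u ea1 in auto)
    have ua: "act2 X (tens u (bvec a1)) \<in> FS (B2 X)" by (rule lin_FS[OF act2_lin[OF X]]) (use u ea1 in auto)
    have "\<rho>3 X Y (\<Lambda> X u (bvec p)) = \<rho>3 X Y (act3 X (tens n (bvec a2)))"
      unfolding pe bvec_pair n_def by (simp add: \<Lambda>_tens[OF X u ea1 ea2])
    also have "\<dots> = tmap (act3 Y) (\<lambda>x. x) (assocl (tmap (\<lambda>x. x) (\<psi> X Y) (assocr (tens (\<rho>3 X Y n) (bvec a2)))))"
      apply (subst compat3[OF X Y tens_FS[OF n ea2]])
      apply (subst tmap_tens[OF lin_add[OF \<rho>3_lin[OF X Y]] addhom_id(1) n ea2])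
      ..
    also have "\<rho>3 X Y n = tmap (g0 Y) (\<lambda>x. x) (tmap (act2 Y) (\<lambda>x. x) (assocl (tmap (\<lambda>x. x) (\<psi> X Y) (assocr (tens (\<rho>2 X Y u) (bvec a1))))))"
      unfolding n_def h_def
      apply (subst g0_comm[OF X Y ua])
      apply (subst compat2[OF X Y tens_FS[OF u ea1]])
      apply (subst tmap_tens[OF lin_add[OF \<rho>2_lin[OF X Y]] addhom_id(1) u ea1])
      ..
    also have "tmap (act3 Y) (\<lambda>x. x) (assocl (tmap (\<lambda>x. x) (\<psi> X Y) (assocr (tens
           (tmap (g0 Y) (\<lambda>x. x) (tmap (act2 Y) (\<lambda>x. x) (assocl (tmap (\<lambda>x. x) (\<psi> X Y) (assocr (tens (\<rho>2 X Y u) (bvec a1)))))))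
           (bvec a2))))) = \<Omega>w X Y (bvec p) (\<rho>2 X Y u)"
      unfolding pe by (rule C1d[OF X Y a1 a2 r])
    finally show "\<rho>3 X Y (\<Lambda> X u (bvec p)) = \<Omega>w X Y (bvec p) (\<rho>2 X Y u)" .
  qed
qed

lemma C1:
  assumes X: "X \<in> Ob" and Y: "Y \<in> Ob" and s: "s \<in> FS (B2 X \<times> Cb X X)"
  shows "\<rho>3 X Y (E X s) = \<Omega> X Y (assocr (tmap (\<rho>2 X Y) (\<lambda>x. x) s))"
proof (rule ext_basis[where B="B2 X \<times> Cb X X" and \<Phi>="\<lambda>s. \<rho>3 X Y (E X s)"
    and \<Psi>="\<lambda>s. \<Omega> X Y (assocr (tmap (\<rho>2 X Y) (\<lambda>x. x) s))", OF _ _ _ s])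
  show "addhom (B2 X \<times> Cb X X) (\<lambda>s. \<rho>3 X Y (E X s))"
    by (rule lin_add[OF lin_comp[OF \<rho>3_lin[OF X Y] E_lin[OF X]]])
  show "addhom (B2 X \<times> Cb X X) (\<lambda>s. \<Omega> X Y (assocr (tmap (\<rho>2 X Y) (\<lambda>x. x) s)))"
    by (rule lin_add[OF lin_comp[OF \<Omega>_lin[OF X Y] lin_comp[OF lin_assocr lin_tmap[OF \<rho>2_lin[OF X Y] lin_id(1)]]]])
  fix p assume "p \<in> B2 X \<times> Cb X X"
  then obtain m c where pe: "p = (m, c)" and m: "m \<in> B2 X" and c: "c \<in> Cb X X" by auto
  have em: "(bvec m :: _ \<Rightarrow> 'k) \<in> FS (B2 X)" and ec: "(bvec c :: _ \<Rightarrow> 'k) \<in> FS (Cb X X)" using m c by auto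
  have r: "\<rho>2 X Y (bvec m) \<in> FS (B2 Y \<times> Cb X Y)" by (rule lin_FS[OF \<rho>2_lin[OF X Y] em])
  have "\<rho>3 X Y (E X (bvec p)) = \<rho>3 X Y (\<Lambda> X (bvec m) (\<Gamma> X (bvec c)))"
    unfolding pe bvec_pair E_tens[OF X em ec] ..
  also have "\<dots> = \<Omega>w X Y (\<Gamma> X (bvec c)) (\<rho>2 X Y (bvec m))" by (rule C1c[OF X Y em \<Gamma>_FS[OF X ec]])
  also have "\<dots> = \<Omega> X Y (assocr (tens (\<rho>2 X Y (bvec m)) (bvec c)))" by (rule C1a[OF X Y c r, symmetric])
  also have "\<dots> = \<Omega> X Y (assocr (tmap (\<rho>2 X Y) (\<lambda>x. x) (bvec p)))" by (simp add: pe tmap_bvec)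
  finally show "\<rho>3 X Y (E X (bvec p)) = \<Omega> X Y (assocr (tmap (\<rho>2 X Y) (\<lambda>x. x) (bvec p)))" .
qed


lemma C2a:
  assumes X: "X \<in> Ob" and Y: "Y \<in> Ob" and v: "v \<in> B2 Y" and w: "w \<in> FS (Cb X Y \<times> Cb X X)"
  shows "\<Omega> X Y (tens (bvec v) w) = \<Theta> Y (bvec v) (L X Y w)"
proof -
  have ev: "(bvec v :: _ \<Rightarrow> 'k) \<in> FS (B2 Y)" using v by auto
  show ?thesis
  proof (rule ext_basis[where B="Cb X Y \<times> Cb X X" and \<Phi>="\<lambda>w. \<Omega> X Y (tens (bvec v) w)"
      and \<Psi>="\<lambda>w. \<Theta> Y (bvec v) (L X Y w)", OF _ _ _ w])
    show "addhom (Cb X Y \<times> Cb X X) (\<lambda>w. \<Omega> X Y (tens (bvec v) w))"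
      by (rule lin_add[OF lin_comp[OF \<Omega>_lin[OF X Y] lin_tens_r[OF ev]]])
    show "addhom (Cb X Y \<times> Cb X X) (\<lambda>w. \<Theta> Y (bvec v) (L X Y w))"
      by (rule lin_add[OF lin_comp[OF \<Theta>_lin[OF Y ev] L_lin[OF X Y]]])
    fix p assume "p \<in> Cb X Y \<times> Cb X X"
    show "\<Omega> X Y (tens (bvec v) (bvec p)) = \<Theta> Y (bvec v) (L X Y (bvec p))"
      unfolding bvec_pair[symmetric] \<Omega>_def by simp
  qed
qed

lemma C2b:
  assumes X: "X \<in> Ob" and Y: "Y \<in> Ob" and v: "v \<in> B2 Y" and z: "z \<in> FS (Cb Y Y \<times> Cb X Y)"
  shows "\<Theta> Y (bvec v) (tmap (\<lambda>x. x) (tmap (\<gamma> Y) (\<lambda>x. x)) (tmap (\<lambda>x. x) assocl (assocr (tens (coev BA) z))))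
       = tmap (E Y) (\<lambda>x. x) (assocl (tens (bvec v) z))"
proof -
  have ev: "(bvec v :: _ \<Rightarrow> 'k) \<in> FS (B2 Y)" using v by auto
  show ?thesis
  proof (rule ext_basis[where B="Cb Y Y \<times> Cb X Y"
      and \<Phi>="\<lambda>z. \<Theta> Y (bvec v) (tmap (\<lambda>x. x) (tmap (\<gamma> Y) (\<lambda>x. x)) (tmap (\<lambda>x. x) assocl (assocr (tens (coev BA) z))))"
      and \<Psi>="\<lambda>z. tmap (E Y) (\<lambda>x. x) (assocl (tens (bvec v) z))", OF _ _ _ z])
    show "addhom (Cb Y Y \<times> Cb X Y) (\<lambda>z. \<Theta> Y (bvec v) (tmap (\<lambda>x. x) (tmap (\<gamma> Y) (\<lambda>x. x)) (tmap (\<lambda>x. x) assocl (assocr (tens (coev BA) z)))))"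
      by (rule lin_add[OF lin_comp[OF \<Theta>_lin[OF Y ev] lin_comp[OF lin_tmap[OF lin_id(1) lin_tmap[OF \<gamma>_lin[OF Y] lin_id(1)]]
            lin_comp[OF lin_tmap[OF lin_id(1) lin_assocl] lin_comp[OF lin_assocr lin_tens_r[OF coevFS]]]]]])
    show "addhom (Cb Y Y \<times> Cb X Y) (\<lambda>z. tmap (E Y) (\<lambda>x. x) (assocl (tens (bvec v) z)))"
      by (rule lin_add[OF lin_comp[OF lin_tmap[OF E_lin[OF Y] lin_id(1)] lin_comp[OF lin_assocl lin_tens_r[OF ev]]]])
    fix q assume "q \<in> Cb Y Y \<times> Cb X Y"
    then obtain c d where qe: "q = (c, d)" and c: "c \<in> Cb Y Y" and d: "d \<in> Cb X Y" by auto
    have ec: "(bvec c :: _ \<Rightarrow> 'k) \<in> FS (Cb Y Y)" and ed: "(bvec d :: _ \<Rightarrow> 'k) \<in> FS (Cb X Y)" using c d by auto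
    have eb: "\<And>b. b \<in> BA \<Longrightarrow> (bvec b :: _ \<Rightarrow> 'k) \<in> FS BA" by auto
    define gb where "gb b = \<gamma> Y (tens (bvec b) (bvec c))" for b
    have gb: "\<And>b. b \<in> BA \<Longrightarrow> gb b \<in> FS BA"
      unfolding gb_def using ec by (intro lin_FS[OF \<gamma>_lin[OF Y]]) auto
    have "(tens (coev BA) (bvec q) :: _ \<Rightarrow> 'k) = vsum BA (\<lambda>b. tens (tens (bvec b) (bvec b)) (tens (bvec c) (bvec d)))"
      unfolding qe bvec_pair coev_vsum[OF finBA] tens_vsum_l ..
    then have "(assocr (tens (coev BA) (bvec q)) :: _ \<Rightarrow> 'k) = vsum BA (\<lambda>b. assocr (tens (tens (bvec b) (bvec b)) (tens (bvec c) (bvec d))))"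
      by (simp add: gaddhom_vsum[OF gaddhom_assocr finBA])
    also have "\<dots> = vsum BA (\<lambda>b. tens (bvec b) (tens (bvec b) (tens (bvec c) (bvec d))))" by simp
    finally have e1: "(assocr (tens (coev BA) (bvec q)) :: _ \<Rightarrow> 'k) = vsum BA (\<lambda>b. tens (bvec b) (tens (bvec b) (tens (bvec c) (bvec d))))" .
    have e2: "tmap (\<lambda>x. x) assocl (vsum BA (\<lambda>b. tens (bvec b) (tens (bvec b) (tens (bvec c) (bvec d))))) =
         (vsum BA (\<lambda>b. tens (bvec b) (tens (tens (bvec b) (bvec c)) (bvec d))) :: _ \<Rightarrow> 'k)"
      by (subst tmap_vsum_tens[OF addhom_id(1) gaddhom_addhom[OF gaddhom_assocl], where Ev="BA \<times> (Cb Y Y \<times> Cb X Y)"])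
         (use ec ed in auto)
    have e3: "tmap (\<lambda>x. x) (tmap (\<gamma> Y) (\<lambda>x. x)) (vsum BA (\<lambda>b. tens (bvec b) (tens (tens (bvec b) (bvec c)) (bvec d)))) =
         vsum BA (\<lambda>b. tens (bvec b) (tens (gb b) (bvec d)))"
      apply (subst tmap_vsum_tens[OF addhom_id(1) addhom_tmap, where Ev="(BA \<times> Cb Y Y) \<times> Cb X Y"])
        apply (use ec ed in auto)[2]
      apply (rule vsum_cong)
      apply (subst tmap_tens[OF lin_add[OF \<gamma>_lin[OF Y]] addhom_id(1)])
      using ec ed by (auto simp: gb_def)
    have e4: "\<Theta> Y (bvec v) (vsum BA (\<lambda>b. tens (bvec b) (tens (gb b) (bvec d)))) =
         vsum BA (\<lambda>b. tens (\<Lambda> Y (bvec v) (tens (bvec b) (gb b))) (bvec d))"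
      apply (subst addhom_vsum[OF lin_add[OF \<Theta>_lin[OF Y ev, where D="Cb X Y"]] finBA])
       apply (use gb ed in auto)[1]
      apply (rule vsum_cong)
      unfolding \<Theta>_def assocl_tens
      by (rule tmap_tens[OF lin_add[OF \<Lambda>_lin[OF Y ev]] addhom_id(1)]) (use gb ed in auto)
    have e5: "tmap (E Y) (\<lambda>x. x) (assocl (tens (bvec v) (bvec q))) = tens (\<Lambda> Y (bvec v) (\<Gamma> Y (bvec c))) (bvec d)"
      unfolding qe bvec_pair assocl_tens
      by (subst tmap_tens[OF lin_add[OF E_lin[OF Y]] addhom_id(1)]) (use ev ec ed in \<open>auto simp: E_tens[OF Y ev ec]\<close>)
    have e6: "\<Lambda> Y (bvec v) (\<Gamma> Y (bvec c)) = vsum BA (\<lambda>b. \<Lambda> Y (bvec v) (tens (bvec b) (gb b)))"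
      unfolding \<Gamma>_eq[OF Y ec] gb_def by (rule \<Lambda>_vsum[OF Y ev]) (use gb[unfolded gb_def] in auto)
    show "\<Theta> Y (bvec v) (tmap (\<lambda>x. x) (tmap (\<gamma> Y) (\<lambda>x. x)) (tmap (\<lambda>x. x) assocl (assocr (tens (coev BA) (bvec q)))))
       = tmap (E Y) (\<lambda>x. x) (assocl (tens (bvec v) (bvec q)))"
      unfolding e1 e2 e3 e4 e5 e6 tens_vsum_l ..
  qed
qed

lemma C2:
  assumes X: "X \<in> Ob" and Y: "Y \<in> Ob" and s: "s \<in> FS (B2 Y \<times> Cb X Y)"
  shows "\<Omega> X Y (tmap (\<lambda>x. x) (\<delta> X X Y) s) = tmap (E Y) (\<lambda>x. x) (assocl (tmap (\<lambda>x. x) (\<delta> X Y Y) s))"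
proof (rule ext_basis[where B="B2 Y \<times> Cb X Y" and \<Phi>="\<lambda>s. \<Omega> X Y (tmap (\<lambda>x. x) (\<delta> X X Y) s)"
    and \<Psi>="\<lambda>s. tmap (E Y) (\<lambda>x. x) (assocl (tmap (\<lambda>x. x) (\<delta> X Y Y) s))", OF _ _ _ s])
  show "addhom (B2 Y \<times> Cb X Y) (\<lambda>s. \<Omega> X Y (tmap (\<lambda>x. x) (\<delta> X X Y) s))"
    by (rule lin_add[OF lin_comp[OF \<Omega>_lin[OF X Y] lin_tmap[OF lin_id(1) \<delta>_lin[OF X X Y]]]])
  show "addhom (B2 Y \<times> Cb X Y) (\<lambda>s. tmap (E Y) (\<lambda>x. x) (assocl (tmap (\<lambda>x. x) (\<delta> X Y Y) s)))"
    by (rule lin_add[OF lin_comp[OF lin_tmap[OF E_lin[OF Y] lin_id(1)] lin_comp[OF lin_assocl lin_tmap[OF lin_id(1) \<delta>_lin[OF X Y Y]]]]])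
  fix p assume "p \<in> B2 Y \<times> Cb X Y"
  then obtain v f where pe: "p = (v, f)" and v: "v \<in> B2 Y" and f: "f \<in> Cb X Y" by auto
  have ef: "(bvec f :: _ \<Rightarrow> 'k) \<in> FS (Cb X Y)" using f by auto
  have d1: "\<delta> X X Y (bvec f) \<in> FS (Cb X Y \<times> Cb X X)" by (rule lin_FS[OF \<delta>_lin[OF X X Y] ef])
  have d2: "\<delta> X Y Y (bvec f) \<in> FS (Cb Y Y \<times> Cb X Y)" by (rule lin_FS[OF \<delta>_lin[OF X Y Y] ef])
  have "\<Omega> X Y (tmap (\<lambda>x. x) (\<delta> X X Y) (bvec p)) = \<Omega> X Y (tens (bvec v) (\<delta> X X Y (bvec f)))"
    by (simp add: pe tmap_bvec)
  also have "\<dots> = \<Theta> Y (bvec v) (L X Y (\<delta> X X Y (bvec f)))" by (rule C2a[OF X Y v d1])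
  also have "L X Y (\<delta> X X Y (bvec f)) = tmap (\<lambda>x. x) (tmap (\<gamma> Y) (\<lambda>x. x)) (tmap (\<lambda>x. x) assocl (assocr (tens (coev BA) (\<delta> X Y Y (bvec f)))))"
    unfolding L_def by (rule nc1[OF X Y ef])
  also have "\<Theta> Y (bvec v) \<dots> = tmap (E Y) (\<lambda>x. x) (assocl (tens (bvec v) (\<delta> X Y Y (bvec f))))"
    by (rule C2b[OF X Y v d2])
  also have "\<dots> = tmap (E Y) (\<lambda>x. x) (assocl (tmap (\<lambda>x. x) (\<delta> X Y Y) (bvec p)))"
    by (simp add: pe tmap_bvec)
  finally show "\<Omega> X Y (tmap (\<lambda>x. x) (\<delta> X X Y) (bvec p)) = tmap (E Y) (\<lambda>x. x) (assocl (tmap (\<lambda>x. x) (\<delta> X Y Y) (bvec p)))" .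
qed

lemma gmap_comod:
  assumes X: "X \<in> Ob" and Y: "Y \<in> Ob" and m: "m \<in> FS (B2 X)"
  shows "\<rho>3 X Y (gmap X m) = tmap (gmap Y) (\<lambda>x. x) (\<rho>2 X Y m)"
proof -
  have rXX: "\<rho>2 X X m \<in> FS (B2 X \<times> Cb X X)" by (rule lin_FS[OF \<rho>2_lin[OF X X] m])
  have rXY: "\<rho>2 X Y m \<in> FS (B2 Y \<times> Cb X Y)" by (rule lin_FS[OF \<rho>2_lin[OF X Y] m])
  have "\<rho>3 X Y (gmap X m) = \<Omega> X Y (assocr (tmap (\<rho>2 X Y) (\<lambda>x. x) (\<rho>2 X X m)))"
    unfolding gmap_def by (rule C1[OF X Y rXX])
  also have "\<dots> = \<Omega> X Y (tmap (\<lambda>x. x) (\<delta> X X Y) (\<rho>2 X Y m))" by (simp only: coassoc2[OF X Y X m])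
  also have "\<dots> = tmap (E Y) (\<lambda>x. x) (assocl (tmap (\<lambda>x. x) (\<delta> X Y Y) (\<rho>2 X Y m)))" by (rule C2[OF X Y rXY])
  also have "assocl (tmap (\<lambda>x. x) (\<delta> X Y Y) (\<rho>2 X Y m)) = tmap (\<rho>2 Y Y) (\<lambda>x. x) (\<rho>2 X Y m)"
    unfolding coassoc2[OF X Y Y m, symmetric] by simp
  also have "tmap (E Y) (\<lambda>x. x) \<dots> = tmap (gmap Y) (\<lambda>x. x) (\<rho>2 X Y m)"
    unfolding gmap_def
    by (rule tmap_comp[OF lin_maps[OF \<rho>2_lin[OF Y Y]] lin_maps[OF lin_id(1)] lin_add[OF E_lin[OF Y]] addhom_id(1) rXY])
  finally show ?thesis .
qed

lemma gmap_hom: "comodA_hom Ob Cb BA B2 \<rho>2 act2 B3 \<rho>3 act3 gmap"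
  unfolding comodA_hom_def comod_hom_def id_def
  using gmap_lin gmap_comod gmap_Alin by blast

end

lemma id_comodA_hom:
  fixes B1 :: "'o \<Rightarrow> 'm set" and act1 :: "'o \<Rightarrow> ('m \<times> 'a \<Rightarrow> 'k::field) \<Rightarrow> ('m \<Rightarrow> 'k)"
    and \<rho>1 :: "'o \<Rightarrow> 'o \<Rightarrow> ('m \<Rightarrow> 'k) \<Rightarrow> ('m \<times> 'c \<Rightarrow> 'k)"
  assumes M1: "comodA Ob Cb \<delta> \<epsilon> BA mu one \<psi> B1 \<rho>1 act1"
  shows "comodA_hom Ob Cb BA B1 \<rho>1 act1 B1 \<rho>1 act1 (\<lambda>X m. m)"
  unfolding comodA_hom_def comod_hom_def
proof (intro conjI ballI)
  fix X assume X: "X \<in> Ob"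
  show "linear_on (B1 X) (B1 X) (\<lambda>m. m)" by (rule lin_id(1))
  fix t :: "'m \<times> 'a \<Rightarrow> 'k" assume t: "t \<in> FS (B1 X \<times> BA)"
  show "act1 X t = act1 X (tmap (\<lambda>m. m) id t)" unfolding id_def tmap_id[OF t] ..
next
  fix X Y and m :: "'m \<Rightarrow> 'k" assume X: "X \<in> Ob" and Y: "Y \<in> Ob" and m: "m \<in> FS (B1 X)"
  have "\<rho>1 X Y m \<in> FS (B1 Y \<times> Cb X Y)" by (rule lin_FS[OF cA_rho_lin[OF M1 X Y] m])
  then show "\<rho>1 X Y m = tmap (\<lambda>m. m) id (\<rho>1 X Y m)" unfolding id_def by (rule tmap_id[symmetric])
qed

lemma maschke_core:
  fixes B1 :: "'o \<Rightarrow> 'm1 set" and B2 :: "'o \<Rightarrow> 'm2 set" and B3 :: "'o \<Rightarrow> 'm3 set"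
    and \<delta> :: "'o \<Rightarrow> 'o \<Rightarrow> 'o \<Rightarrow> ('c \<Rightarrow> 'k::field) \<Rightarrow> ('c \<times> 'c \<Rightarrow> 'k)"
    and r :: "'o \<Rightarrow> ('m2 \<Rightarrow> 'k) \<Rightarrow> ('m1 \<Rightarrow> 'k)"
  assumes coalg: "coalg_so Ob Cb \<delta> \<epsilon>"
    and alg: "kalg BA mu one"
    and finBA: "finite BA"
    and ent: "entwining Ob Cb \<delta> \<epsilon> BA mu one \<psi>"
    and nc: "norm_cointegral Ob Cb \<delta> \<epsilon> BA mu one \<psi> \<gamma>"
    and M1: "comodA Ob Cb \<delta> \<epsilon> BA mu one \<psi> B1 \<rho>1 act1"
    and M2: "comodA Ob Cb \<delta> \<epsilon> BA mu one \<psi> B2 \<rho>2 act2"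
    and M3: "comodA Ob Cb \<delta> \<epsilon> BA mu one \<psi> B3 \<rho>3 act3"
    and ih: "comodA_hom Ob Cb BA B1 \<rho>1 act1 B2 \<rho>2 act2 i"
    and fh: "comodA_hom Ob Cb BA B1 \<rho>1 act1 B3 \<rho>3 act3 f"
    and rh: "comod_hom Ob Cb B2 \<rho>2 B1 \<rho>1 r"
    and ri: "\<forall>X\<in>Ob. \<forall>m\<in>FS (B1 X). r X (i X m) = m"
  shows "\<exists>g. comodA_hom Ob Cb BA B2 \<rho>2 act2 B3 \<rho>3 act3 g \<and> (\<forall>X\<in>Ob. \<forall>m\<in>FS (B1 X). g X (i X m) = f X m)"
proof -
  define g0 where "g0 X = (\<lambda>m. f X (r X m))" for X
  have f_lin: "\<And>X. X \<in> Ob \<Longrightarrow> linear_on (B1 X) (B3 X) (f X)" by (rule ch_lin[OF cAh_ch[OF fh]])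
  have r_lin: "\<And>X. X \<in> Ob \<Longrightarrow> linear_on (B2 X) (B1 X) (r X)" by (rule ch_lin[OF rh])
  have g0h: "comod_hom Ob Cb B2 \<rho>2 B3 \<rho>3 g0"
    unfolding comod_hom_def
  proof (intro conjI ballI)
    fix X assume X: "X \<in> Ob"
    show "linear_on (B2 X) (B3 X) (g0 X)" unfolding g0_def by (rule lin_comp[OF f_lin[OF X] r_lin[OF X]])
    fix Y and m :: "'m2 \<Rightarrow> 'k" assume Y: "Y \<in> Ob" and m: "m \<in> FS (B2 X)"
    have rm: "r X m \<in> FS (B1 X)" by (rule lin_FS[OF r_lin[OF X] m])
    have r2: "\<rho>2 X Y m \<in> FS (B2 Y \<times> Cb X Y)" by (rule lin_FS[OF cA_rho_lin[OF M2 X Y] m])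
    have "\<rho>3 X Y (g0 X m) = tmap (f Y) (\<lambda>x. x) (\<rho>1 X Y (r X m))"
      unfolding g0_def by (rule ch_comm[OF cAh_ch[OF fh] X Y rm])
    also have "\<dots> = tmap (f Y) (\<lambda>x. x) (tmap (r Y) (\<lambda>x. x) (\<rho>2 X Y m))"
      by (simp only: ch_comm[OF rh X Y m])
    also have "\<dots> = tmap (g0 Y) (\<lambda>x. x) (\<rho>2 X Y m)"
      unfolding g0_def
      by (rule tmap_comp[OF lin_maps[OF r_lin[OF Y]] lin_maps[OF lin_id(1)] lin_add[OF f_lin[OF Y]] addhom_id(1) r2])
    finally show "\<rho>3 X Y (g0 X m) = tmap (g0 Y) id (\<rho>2 X Y m)" by (simp add: id_def)
  qed
  interpret A: avg Ob Cb \<delta> \<epsilon> BA mu one \<psi> \<gamma> B2 \<rho>2 act2 B3 \<rho>3 act3 g0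
    by (unfold_locales; fact)
  have gi: "\<And>X n. X \<in> Ob \<Longrightarrow> n \<in> FS (B1 X) \<Longrightarrow> g0 X (i X n) = f X n"
    unfolding g0_def using ri by simp
  show ?thesis
    by (rule exI[of _ A.gmap]) (use A.gmap_hom A.g_extends[OF M1 ih fh gi] in blast)
qed


theorem theorem7p8:
  fixes Ob :: "'o set"
    and Cb :: "'o \<Rightarrow> 'o \<Rightarrow> 'c set"
    and \<delta> :: "'o \<Rightarrow> 'o \<Rightarrow> 'o \<Rightarrow> ('c \<Rightarrow> 'k::field) \<Rightarrow> ('c \<times> 'c \<Rightarrow> 'k)"
    and \<epsilon> :: "'o \<Rightarrow> ('c \<Rightarrow> 'k) \<Rightarrow> 'k"
    and BA :: "'a set"
    and mu :: "('a \<times> 'a \<Rightarrow> 'k) \<Rightarrow> ('a \<Rightarrow> 'k)"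
    and one :: "'a \<Rightarrow> 'k"
    and \<psi> :: "'o \<Rightarrow> 'o \<Rightarrow> ('c \<times> 'a \<Rightarrow> 'k) \<Rightarrow> ('a \<times> 'c \<Rightarrow> 'k)"
    and \<gamma> :: "'o \<Rightarrow> ('a \<times> 'c \<Rightarrow> 'k) \<Rightarrow> ('a \<Rightarrow> 'k)"
  assumes "coalg_so Ob Cb \<delta> \<epsilon>"
    and "kalg BA mu one"
    and "finite BA"
    and "entwining Ob Cb \<delta> \<epsilon> BA mu one \<psi>"
    and "norm_cointegral Ob Cb \<delta> \<epsilon> BA mu one \<psi> \<gamma>"
  shows "Gpsi_semisimple Ob Cb \<delta> \<epsilon> BA mu one \<psi> TYPE('m1) TYPE('m2) TYPE('m3) \<and>
         Gpsi_Maschke Ob Cb \<delta> \<epsilon> BA mu one \<psi> TYPE('m1) TYPE('m2) TYPE('m3)"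
  proof -
  have S: "Gpsi_semisimple Ob Cb \<delta> \<epsilon> BA mu one \<psi> TYPE('m1) TYPE('m2) TYPE('m3)"
    unfolding Gpsi_semisimple_def
    apply (intro allI impI)
    apply (elim conjE exE)
    apply (rule maschke_core[where f="\<lambda>X m. m", OF assms(1-5)])
    apply assumption+
    apply (rule id_comodA_hom, assumption)
    apply assumption+
    done
  have M: "Gpsi_Maschke Ob Cb \<delta> \<epsilon> BA mu one \<psi> TYPE('m1) TYPE('m2) TYPE('m3)"
    unfolding Gpsi_Maschke_def
    apply (intro allI impI)
    apply (elim conjE exE)
    apply (rule maschke_core[OF assms(1-5)])
    apply assumption+
    done
  show ?thesis using S M by blast
qed

end
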